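(* Let $\Gamma$ be a group generated by a finite set $X$. If $\Gamma$ has solvable Equality Problem on a set $S\times S$, where $S\subset\mathbb F_X$ is UB-generic, then $\Gamma$ has solvable Word Problem.
   Context: $\mathbb F_X$ is the free group on $X$, $\pi:\mathbb F_X\to\Gamma$ the canonical epimorphism, $|\omega|$ the reduced word length, $B_n=\{\omega\in\mathbb F_X:|\omega|\le n\}$. $S\subset\mathbb F_X$ is UB-generic if $\limsup_{n\to\infty}\max_{\omega\in\mathbb F_X}\frac{|S\cap\omega B_n|}{|B_n|}=1$. $\Gamma$ has solvable Word Problem if there is an algorithm deciding for every $\omega\in\mathbb F_X$ whether $\pi(\omega)$ is trivial. $\Gamma$ has solvable Equality Problem on $T\subset\mathbb F_X^2$ if there is a partial algorithm that halts at least on every $(\omega_1,\omega_2)\in T$ and, whenever it halts, correctly decides whether $\pi(\omega_1)=\pi(\omega_2)$. *)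

theory Defs
  imports Complex_Main "HOL-Algebra.Generated_Groups" "HOL-Library.Nat_Bijection"
    "HOL-Library.Extended_Real" "HOL-Library.Liminf_Limsup"
begin

datatype recf =
    Zf
  | Sf
  | Idf nat nat                 (* Idf n i : projection on the i-th of n arguments *)
  | Cn nat recf "recf list"
  | Pr nat recf recf
  | Mn nat recf

inductive rec_eval :: "recf \<Rightarrow> nat list \<Rightarrow> nat \<Rightarrow> bool" where
  ev_Z: "rec_eval Zf xs 0"
| ev_S: "rec_eval Sf [x] (Suc x)"
| ev_Id: "length xs = n \<Longrightarrow> i < n \<Longrightarrow> rec_eval (Idf n i) xs (xs ! i)"
| ev_Cn: "length xs = n \<Longrightarrow> list_all2 (\<lambda>g y. rec_eval g xs y) gs ys \<Longrightarrow>
           rec_eval f ys z \<Longrightarrow> rec_eval (Cn n f gs) xs z"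
| ev_Pr0: "length xs = n \<Longrightarrow> rec_eval f xs y \<Longrightarrow> rec_eval (Pr n f g) (0 # xs) y"
| ev_PrS: "length xs = n \<Longrightarrow> rec_eval (Pr n f g) (x # xs) y \<Longrightarrow>
           rec_eval g (x # y # xs) z \<Longrightarrow> rec_eval (Pr n f g) (Suc x # xs) z"
| ev_Mn: "length xs = n \<Longrightarrow> rec_eval f (y # xs) 0 \<Longrightarrow>
           (\<forall>z<y. \<exists>v. v \<noteq> 0 \<and> rec_eval f (z # xs) v) \<Longrightarrow> rec_eval (Mn n f) xs y"

text \<open>A letter \<open>(i, False)\<close> stands for the generator \<open>x_i\<close>, \<open>(i, True)\<close> for its inverse.\<close>

type_synonym letter = "nat \<times> bool"

definition inv_letter :: "letter \<Rightarrow> letter" where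
  "inv_letter l = (fst l, \<not> snd l)"

fun reduced :: "letter list \<Rightarrow> bool" where
  "reduced (a # b # w) = (b \<noteq> inv_letter a \<and> reduced (b # w))"
| "reduced _ = True"

text \<open>Elements of the free group F_X: reduced words over X and its inverses.\<close>
definition free_group_words :: "nat \<Rightarrow> letter list set" where
  "free_group_words k = {w. reduced w \<and> (\<forall>l\<in>set w. fst l < k)}"

definition cancel_cons :: "letter \<Rightarrow> letter list \<Rightarrow> letter list" where
  "cancel_cons a w = (case w of [] \<Rightarrow> [a] | b # w' \<Rightarrow> (if b = inv_letter a then w' else a # w))"

definition reduce :: "letter list \<Rightarrow> letter list" where
  "reduce w = foldr cancel_cons w []"

definition fg_mult :: "letter list \<Rightarrow> letter list \<Rightarrow> letter list" where
  "fg_mult u v = reduce (u @ v)"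

definition ball_fg :: "nat \<Rightarrow> nat \<Rightarrow> letter list set" where
  "ball_fg k n = {w \<in> free_group_words k. length w \<le> n}"

definition UB_generic :: "nat \<Rightarrow> letter list set \<Rightarrow> bool" where
  "UB_generic k S \<longleftrightarrow>
     limsup (\<lambda>n. ereal (SUP \<omega>\<in>free_group_words k.
        real (card (S \<inter> fg_mult \<omega> ` ball_fg k n)) / real (card (ball_fg k n)))) = 1"

definition letter_val :: "('g, 'b) monoid_scheme \<Rightarrow> (nat \<Rightarrow> 'g) \<Rightarrow> letter \<Rightarrow> 'g" where
  "letter_val G x l = (if snd l then inv\<^bsub>G\<^esub> (x (fst l)) else x (fst l))"

definition word_val :: "('g, 'b) monoid_scheme \<Rightarrow> (nat \<Rightarrow> 'g) \<Rightarrow> letter list \<Rightarrow> 'g" where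
  "word_val G x w = foldr (\<lambda>l g. letter_val G x l \<otimes>\<^bsub>G\<^esub> g) w \<one>\<^bsub>G\<^esub>"

definition letter_code :: "letter \<Rightarrow> nat" where
  "letter_code l = 2 * fst l + (if snd l then 1 else 0)"

definition word_code :: "letter list \<Rightarrow> nat" where
  "word_code w = list_encode (map letter_code w)"

definition word_problem_solvable ::
    "('g, 'b) monoid_scheme \<Rightarrow> nat \<Rightarrow> (nat \<Rightarrow> 'g) \<Rightarrow> bool" where
  "word_problem_solvable G k x \<longleftrightarrow>
     (\<exists>P. \<forall>w\<in>free_group_words k.
        rec_eval P [word_code w] (if word_val G x w = \<one>\<^bsub>G\<^esub> then 1 else 0))"

definition equality_problem_solvable_on ::
    "('g, 'b) monoid_scheme \<Rightarrow> nat \<Rightarrow> (nat \<Rightarrow> 'g) \<Rightarrow> (letter list \<times> letter list) set \<Rightarrow> bool" where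
  "equality_problem_solvable_on G k x T \<longleftrightarrow>
     (\<exists>P. (\<forall>(u, v)\<in>T. \<exists>r. rec_eval P [word_code u, word_code v] r) \<and>
          (\<forall>u\<in>free_group_words k. \<forall>v\<in>free_group_words k. \<forall>r.
             rec_eval P [word_code u, word_code v] r \<longrightarrow>
             r = (if word_val G x u = word_val G x v then 1 else 0)))"

end

theory Submission
  imports Defs
begin

definition computes :: "nat \<Rightarrow> recf \<Rightarrow> (nat list \<Rightarrow> nat) \<Rightarrow> bool" where
  "computes n f F \<longleftrightarrow> (\<forall>xs. length xs = n \<longrightarrow> rec_eval f xs (F xs))"

lemma computesD: "computes n f F \<Longrightarrow> length xs = n \<Longrightarrow> rec_eval f xs (F xs)"
  unfolding computes_def by blast

lemma comp_Z: "computes n Zf (\<lambda>_. 0)"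
  unfolding computes_def by (simp add: ev_Z)

lemma comp_S: "computes 1 Sf (\<lambda>xs. Suc (hd xs))"
  unfolding computes_def by (auto simp: length_Suc_conv ev_S)

lemma comp_Id: "i < n \<Longrightarrow> computes n (Idf n i) (\<lambda>xs. xs ! i)"
  unfolding computes_def by (simp add: ev_Id)

lemma comp_Cn:
  assumes "computes (length gs) f F" "length Gs = length gs"
    "\<And>i. i < length gs \<Longrightarrow> computes n (gs ! i) (Gs ! i)"
  shows "computes n (Cn n f gs) (\<lambda>xs. F (map (\<lambda>G. G xs) Gs))"
  unfolding computes_def
proof (intro allI impI)
  fix xs :: "nat list" assume l: "length xs = n"
  have "list_all2 (\<lambda>g y. rec_eval g xs y) gs (map (\<lambda>G. G xs) Gs)"
    using assms(2,3) l by (auto simp: list_all2_conv_all_nth computes_def)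
  moreover have "rec_eval f (map (\<lambda>G. G xs) Gs) (F (map (\<lambda>G. G xs) Gs))"
    using assms(1,2) by (auto simp: computes_def)
  ultimately show "rec_eval (Cn n f gs) xs (F (map (\<lambda>G. G xs) Gs))"
    using ev_Cn[OF l] by blast
qed

lemma comp_Cn1:
  assumes "computes 1 f F" "computes n g G"
  shows "computes n (Cn n f [g]) (\<lambda>xs. F [G xs])"
proof -
  have "computes n (Cn n f [g]) (\<lambda>xs. F (map (\<lambda>G. G xs) [G]))"
    by (rule comp_Cn) (use assms in \<open>auto simp: less_Suc_eq\<close>)
  then show ?thesis by simp
qed

lemma comp_Cn2:
  assumes "computes 2 f F" "computes n g G" "computes n h H"
  shows "computes n (Cn n f [g, h]) (\<lambda>xs. F [G xs, H xs])"
proof -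
  have "computes n (Cn n f [g, h]) (\<lambda>xs. F (map (\<lambda>G. G xs) [G, H]))"
    by (rule comp_Cn) (use assms in \<open>auto simp: less_Suc_eq numeral_2_eq_2\<close>)
  then show ?thesis by simp
qed

lemma comp_Pr:
  assumes "computes n f F" "computes (Suc (Suc n)) g G"
  shows "computes (Suc n) (Pr n f g) (\<lambda>xs. rec_nat (F (tl xs)) (\<lambda>i r. G (i # r # tl xs)) (hd xs))"
  unfolding computes_def
proof (intro allI impI)
  fix xs :: "nat list" assume "length xs = Suc n"
  then obtain x ys where xs: "xs = x # ys" and l: "length ys = n" by (cases xs) auto
  have "rec_eval (Pr n f g) (x # ys) (rec_nat (F ys) (\<lambda>i r. G (i # r # ys)) x)"
  proof (induction x)
    case 0 then show ?case using assms(1) l by (simp add: computes_def ev_Pr0)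
  next
    case (Suc x)
    have "rec_eval g (x # rec_nat (F ys) (\<lambda>i r. G (i # r # ys)) x # ys) (G (x # rec_nat (F ys) (\<lambda>i r. G (i # r # ys)) x # ys))"
      using assms(2) l by (simp add: computes_def)
    from ev_PrS[OF l Suc this] show ?case by simp
  qed
  then show "rec_eval (Pr n f g) xs (rec_nat (F (tl xs)) (\<lambda>i r. G (i # r # tl xs)) (hd xs))"
    by (simp add: xs)
qed

lemma eval_Mn:
  assumes "computes (Suc n) f F" "length xs = n" "F (y # xs) = 0"
  shows "rec_eval (Mn n f) xs (LEAST y. F (y # xs) = 0)"
proof -
  let ?y = "LEAST y. F (y # xs) = 0"
  have "F (?y # xs) = 0" by (rule LeastI[of _ y]) (rule assms(3))
  moreover have "\<forall>z<?y. F (z # xs) \<noteq> 0" using not_less_Least by blast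
  moreover have "\<And>z. rec_eval f (z # xs) (F (z # xs))"
    using assms(1,2) by (simp add: computes_def)
  ultimately show ?thesis using ev_Mn[OF assms(2), of f ?y] by metis
qed

lemma comp_Mn:
  assumes "computes (Suc n) f F" "\<And>xs. length xs = n \<Longrightarrow> \<exists>y. F (y # xs) = 0"
  shows "computes n (Mn n f) (\<lambda>xs. LEAST y. F (y # xs) = 0)"
  unfolding computes_def using eval_Mn assms by blast

lemma computes_cong: "computes n f F \<Longrightarrow> (\<And>xs. length xs = n \<Longrightarrow> F xs = G xs) \<Longrightarrow> computes n f G"
  unfolding computes_def by auto

lemma rec_nat_0[simp]: "rec_nat a f 0 = a" by simp
lemma rec_nat_Suc[simp]: "rec_nat a f (Suc n) = f n (rec_nat a f n)" by simp

definition "add2 = Pr 1 (Idf 1 0) (Cn 3 Sf [Idf 3 1])"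
definition "pred1 = Pr 0 Zf (Idf 2 0)"
definition "monus2 = Pr 1 (Idf 1 0) (Cn 3 pred1 [Idf 3 1])"
definition "mul2 = Pr 1 Zf (Cn 3 add2 [Idf 3 1, Idf 3 2])"

lemma rn_add: "rec_nat y (\<lambda>i r. Suc r) x = x + y" by (induction x) auto
lemma rn_pred: "rec_nat 0 (\<lambda>i r. i) x = x - 1" by (induction x) auto
lemma rn_monus: "rec_nat y (\<lambda>i r. r - Suc 0) x = y - x" by (induction x) auto
lemma rn_mul: "rec_nat 0 (\<lambda>i r. r + y) x = x * y" by (induction x) auto

lemma hd_nth0: "xs \<noteq> [] \<Longrightarrow> hd xs = xs ! 0" by (cases xs) auto

lemma comp_PrI:
  assumes "computes n f F" "computes m g G" "m = Suc (Suc n)" "k = Suc n"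
  shows "computes k (Pr n f g) (\<lambda>xs. rec_nat (F (tl xs)) (\<lambda>i r. G (i # r # tl xs)) (hd xs))"
  using comp_Pr[of n f F g G] assms by simp

lemma comp_add2: "computes 2 add2 (\<lambda>xs. xs ! 0 + xs ! 1)"
proof -
  have a: "computes 1 (Idf 1 0) (\<lambda>xs. xs ! 0)" by (rule comp_Id) simp
  have b: "computes 3 (Cn 3 Sf [Idf 3 1]) (\<lambda>xs. Suc (hd [xs ! 1]))"
    by (rule comp_Cn1[OF comp_S comp_Id]) simp
  show ?thesis unfolding add2_def
    by (rule computes_cong[OF comp_PrI[OF a b]]) (auto simp: rn_add length_Suc_conv numeral_2_eq_2)
qed

lemma comp_pred1: "computes 1 pred1 (\<lambda>xs. xs ! 0 - 1)"
proof -
  have b: "computes 2 (Idf 2 0) (\<lambda>xs. xs ! 0)" by (rule comp_Id) simp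
  show ?thesis unfolding pred1_def
    by (rule computes_cong[OF comp_PrI[OF comp_Z b]]) (auto simp: rn_pred length_Suc_conv)
qed

lemma comp_monus2: "computes 2 monus2 (\<lambda>xs. xs ! 1 - xs ! 0)"
proof -
  have a: "computes 1 (Idf 1 0) (\<lambda>xs. xs ! 0)" by (rule comp_Id) simp
  have b: "computes 3 (Cn 3 pred1 [Idf 3 1]) (\<lambda>xs. [xs ! 1] ! 0 - 1)"
    by (rule comp_Cn1[OF comp_pred1 comp_Id]) simp
  show ?thesis unfolding monus2_def
    by (rule computes_cong[OF comp_PrI[OF a b]]) (auto simp: rn_monus length_Suc_conv numeral_2_eq_2)
qed

lemma comp_mul2: "computes 2 mul2 (\<lambda>xs. xs ! 0 * xs ! 1)"
proof -
  have b: "computes 3 (Cn 3 add2 [Idf 3 1, Idf 3 2]) (\<lambda>xs. [xs ! 1, xs ! 2] ! 0 + [xs ! 1, xs ! 2] ! 1)"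
    by (rule comp_Cn2[OF comp_add2 comp_Id comp_Id]) simp_all
  show ?thesis unfolding mul2_def
    by (rule computes_cong[OF comp_PrI[OF comp_Z b]]) (auto simp: rn_mul length_Suc_conv numeral_2_eq_2)
qed

fun cconst :: "nat \<Rightarrow> nat \<Rightarrow> recf" where
  "cconst n 0 = Zf"
| "cconst n (Suc c) = Cn n Sf [cconst n c]"

lemma comp_const: "computes n (cconst n c) (\<lambda>_. c)"
proof (induction c)
  case 0 then show ?case by (simp add: comp_Z)
next
  case (Suc c)
  from comp_Cn1[OF comp_S Suc] show ?case by simp
qed

definition "cadd n p q = Cn n add2 [p, q]"
definition "cmul n p q = Cn n mul2 [p, q]"
definition "csub n p q = Cn n monus2 [q, p]"
definition "cpred n p = Cn n pred1 [p]"
definition "cnot n p = csub n (cconst n 1) p"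
definition "csg n p = cnot n (cnot n p)"
definition "cif n c a b = cadd n (cmul n (csg n c) a) (cmul n (cnot n c) b)"
definition "ceq n p q = cnot n (cadd n (csub n p q) (csub n q p))"
definition "cless n p q = csg n (csub n q p)"

lemma comp_add: "computes n p P \<Longrightarrow> computes n q Q \<Longrightarrow> computes n (cadd n p q) (\<lambda>xs. P xs + Q xs)"
  unfolding cadd_def using comp_Cn2[OF comp_add2] by simp
lemma comp_mul: "computes n p P \<Longrightarrow> computes n q Q \<Longrightarrow> computes n (cmul n p q) (\<lambda>xs. P xs * Q xs)"
  unfolding cmul_def using comp_Cn2[OF comp_mul2] by simp
lemma comp_sub: "computes n p P \<Longrightarrow> computes n q Q \<Longrightarrow> computes n (csub n p q) (\<lambda>xs. P xs - Q xs)"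
  unfolding csub_def using comp_Cn2[OF comp_monus2] by simp
lemma comp_pred: "computes n p P \<Longrightarrow> computes n (cpred n p) (\<lambda>xs. P xs - 1)"
  unfolding cpred_def using comp_Cn1[OF comp_pred1] by simp
lemma comp_not: "computes n p P \<Longrightarrow> computes n (cnot n p) (\<lambda>xs. if P xs = 0 then 1 else 0)"
  unfolding cnot_def by (rule computes_cong[OF comp_sub[OF comp_const]]) auto
lemma comp_sg: "computes n p P \<Longrightarrow> computes n (csg n p) (\<lambda>xs. if P xs = 0 then 0 else 1)"
  unfolding csg_def by (rule computes_cong[OF comp_not[OF comp_not]]) auto
lemma comp_if: "computes n c C \<Longrightarrow> computes n a A \<Longrightarrow> computes n b B \<Longrightarrow>
   computes n (cif n c a b) (\<lambda>xs. if C xs \<noteq> 0 then A xs else B xs)"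
  unfolding cif_def
  by (rule computes_cong[OF comp_add[OF comp_mul[OF comp_sg] comp_mul[OF comp_not]]]) auto
lemma comp_eq: "computes n p P \<Longrightarrow> computes n q Q \<Longrightarrow>
   computes n (ceq n p q) (\<lambda>xs. if P xs = Q xs then 1 else 0)"
  unfolding ceq_def by (rule computes_cong[OF comp_not[OF comp_add[OF comp_sub comp_sub]]]) auto
lemma comp_less: "computes n p P \<Longrightarrow> computes n q Q \<Longrightarrow>
   computes n (cless n p q) (\<lambda>xs. if P xs < Q xs then 1 else 0)"
  unfolding cless_def by (rule computes_cong[OF comp_sg[OF comp_sub]]) auto
lemma comp_Idx: "i < n \<Longrightarrow> computes n (Idf n i) (\<lambda>xs. xs ! i)" by (rule comp_Id)

fun bm :: "(nat \<Rightarrow> bool) \<Rightarrow> nat \<Rightarrow> nat" where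
  "bm P 0 = 0"
| "bm P (Suc j) = bm P j + (if bm P j = j \<and> \<not> P j then 1 else 0)"

lemma bm_le: "bm P j \<le> j"
  by (induction j) auto

lemma bm_below: "z < bm P j \<Longrightarrow> \<not> P z"
proof (induction j)
  case 0 then show ?case by simp
next
  case (Suc j)
  show ?case
  proof (cases "bm P j = j \<and> \<not> P j")
    case True
    then show ?thesis using Suc by (auto simp: less_Suc_eq)
  next
    case False
    then show ?thesis using Suc by auto
  qed
qed

lemma bm_found: "bm P j < j \<Longrightarrow> P (bm P j)"
proof (induction j)
  case 0 then show ?case by simp
next
  case (Suc j)
  have le: "bm P j \<le> j" by (rule bm_le)
  show ?case
  proof (cases "bm P j = j \<and> \<not> P j")
    case True
    then show ?thesis using Suc by auto
  next
    case False
    then have eq: "bm P (Suc j) = bm P j" by simp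
    show ?thesis
    proof (cases "bm P j = j")
      case True then show ?thesis using False eq by auto
    next
      case False then show ?thesis using Suc le eq by auto
    qed
  qed
qed

lemma bm_char: "P h \<Longrightarrow> (\<And>z. z < h \<Longrightarrow> \<not> P z) \<Longrightarrow> h < j \<Longrightarrow> bm P j = h"
proof -
  assume a: "P h" "\<And>z. z < h \<Longrightarrow> \<not> P z" "h < j"
  show "bm P j = h"
  proof (cases "bm P j < j")
    case True
    then have "P (bm P j)" by (rule bm_found)
    then have "\<not> bm P j < h" using a(2) by blast
    moreover have "\<not> h < bm P j" using bm_below a(1) by blast
    ultimately show ?thesis by simp
  next
    case False
    then have "bm P j = j" using bm_le[of P j] by simp
    then show ?thesis using bm_below[of h P j] a by simp
  qed
qed

primrec cv :: "recf \<Rightarrow> nat \<Rightarrow> nat list \<Rightarrow> nat" where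
  "cv Zf = (\<lambda>t xs. 1)"
| "cv Sf = (\<lambda>t xs. if length xs = 1 then Suc (Suc (hd xs)) else 0)"
| "cv (Idf n i) = (\<lambda>t xs. if length xs = n \<and> i < n then Suc (xs ! i) else 0)"
| "cv (Cn n f gs) = (\<lambda>t xs. if length xs = n \<and> (\<forall>h\<in>set (map cv gs). h t xs \<noteq> 0)
      then cv f t (map (\<lambda>h. h t xs - 1) (map cv gs)) else 0)"
| "cv (Pr n f g) = (\<lambda>t xs. case xs of [] \<Rightarrow> 0 | x # ys \<Rightarrow> if length ys = n then
      rec_nat (cv f t ys) (\<lambda>i r. if r = 0 then 0 else cv g t (i # (r - 1) # ys)) x else 0)"
| "cv (Mn n f) = (\<lambda>t xs. if length xs = n then
      (if bm (\<lambda>z. cv f t (z # xs) \<le> 1) t < t \<and> cv f t (bm (\<lambda>z. cv f t (z # xs) \<le> 1) t # xs) = 1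
       then Suc (bm (\<lambda>z. cv f t (z # xs) \<le> 1) t) else 0) else 0)"

lemma cv_Cn: "cv (Cn n f gs) t xs = (if length xs = n \<and> (\<forall>g\<in>set gs. cv g t xs \<noteq> 0)
      then cv f t (map (\<lambda>g. cv g t xs - 1) gs) else 0)"
  by (auto simp: comp_def)

declare cv.simps(4)[simp del]

lemma la2_map_same: "(\<And>g. g \<in> set gs \<Longrightarrow> P g (h g)) \<Longrightarrow> list_all2 P gs (map h gs)"
  by (induction gs) auto

lemma cv_sound: "cv f t xs = Suc y \<Longrightarrow> rec_eval f xs y"
proof (induction f arbitrary: t xs y)
  case Zf then show ?case by (simp add: ev_Z)
next
  case Sf
  then obtain x where "xs = [x]" "y = Suc x" by (auto split: if_splits simp: length_Suc_conv)
  then show ?case by (simp add: ev_S)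
next
  case (Idf n i) then show ?case by (auto split: if_splits intro!: ev_Id)
next
  case (Cn n f gs)
  from Cn.prems have l: "length xs = n" and nz: "\<forall>g\<in>set gs. cv g t xs \<noteq> 0"
    and fv: "cv f t (map (\<lambda>g. cv g t xs - 1) gs) = Suc y"
    by (auto simp: cv_Cn split: if_splits)
  have "list_all2 (\<lambda>g y. rec_eval g xs y) gs (map (\<lambda>g. cv g t xs - 1) gs)"
  proof (rule la2_map_same)
    fix g assume g: "g \<in> set gs"
    then have "cv g t xs = Suc (cv g t xs - 1)" using nz by auto
    then show "rec_eval g xs (cv g t xs - 1)" using Cn.IH(2)[OF g] by blast
  qed
  moreover have "rec_eval f (map (\<lambda>g. cv g t xs - 1) gs) y" using Cn.IH(1) fv by blast
  ultimately show ?case using ev_Cn[OF l] by blast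
next
  case (Pr n f g)
  from Pr.prems obtain x ys where xs: "xs = x # ys" and l: "length ys = n"
    by (auto split: if_splits list.splits)
  have R: "rec_nat (cv f t ys) (\<lambda>i r. if r = 0 then 0 else cv g t (i # (r - 1) # ys)) x = Suc y
        \<Longrightarrow> rec_eval (Pr n f g) (x # ys) y" for y
  proof (induction x arbitrary: y)
    case 0 then show ?case using Pr.IH(1) by (simp add: ev_Pr0[OF l])
  next
    case (Suc x)
    let ?r = "rec_nat (cv f t ys) (\<lambda>i r. if r = 0 then 0 else cv g t (i # (r - 1) # ys)) x"
    from Suc.prems have nz: "?r \<noteq> 0" and gv: "cv g t (x # (?r - 1) # ys) = Suc y"
      by (auto split: if_splits)
    have "rec_eval (Pr n f g) (x # ys) (?r - 1)" using Suc.IH nz by simp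
    moreover have "rec_eval g (x # (?r - 1) # ys) y" using Pr.IH(2) gv by blast
    ultimately show ?case by (rule ev_PrS[OF l])
  qed
  show ?case unfolding xs by (rule R) (use Pr.prems in \<open>simp add: xs l\<close>)
next
  case (Mn n f)
  let ?P = "\<lambda>z. cv f t (z # xs) \<le> 1"
  let ?h = "bm ?P t"
  from Mn.prems have l: "length xs = n" and h: "?h < t" and v: "cv f t (?h # xs) = Suc 0" and y: "y = ?h"
    by (auto split: if_splits)
  have "rec_eval f (?h # xs) 0" using Mn.IH v by blast
  moreover have "\<forall>z<?h. \<exists>v. v \<noteq> 0 \<and> rec_eval f (z # xs) v"
  proof (intro allI impI)
    fix z assume "z < ?h"
    then have "\<not> ?P z" by (rule bm_below)
    then have "cv f t (z # xs) = Suc (cv f t (z # xs) - 1)" "cv f t (z # xs) - 1 \<noteq> 0" by auto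
    then show "\<exists>v. v \<noteq> 0 \<and> rec_eval f (z # xs) v" using Mn.IH by blast
  qed
  ultimately show ?case using ev_Mn[OF l] y by blast
qed

lemma cv_mono: "cv f t xs = Suc y \<Longrightarrow> t \<le> t' \<Longrightarrow> cv f t' xs = Suc y"
proof (induction f arbitrary: t xs y)
  case Zf then show ?case by simp
next
  case Sf then show ?case by simp
next
  case (Idf n i) then show ?case by simp
next
  case (Cn n f gs)
  from Cn.prems have l: "length xs = n" and nz: "\<forall>g\<in>set gs. cv g t xs \<noteq> 0"
    and fv: "cv f t (map (\<lambda>g. cv g t xs - 1) gs) = Suc y"
    by (auto simp: cv_Cn split: if_splits)
  have eq: "cv g t' xs = cv g t xs" if g: "g \<in> set gs" for g
  proof -
    have "cv g t xs = Suc (cv g t xs - 1)" using nz g by auto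
    then show ?thesis using Cn.IH(2)[OF g] Cn.prems(2) by metis
  qed
  have m: "map (\<lambda>g. cv g t' xs - 1) gs = map (\<lambda>g. cv g t xs - 1) gs"
    by (rule map_cong) (simp_all add: eq)
  have nz': "\<forall>g\<in>set gs. cv g t' xs \<noteq> 0" using nz eq by simp
  have "cv (Cn n f gs) t' xs = cv f t' (map (\<lambda>g. cv g t' xs - 1) gs)"
    using l nz' by (simp only: cv_Cn) simp
  also have "\<dots> = cv f t' (map (\<lambda>g. cv g t xs - 1) gs)" by (simp only: m)
  also have "\<dots> = Suc y" using Cn.IH(1) fv Cn.prems(2) by blast
  finally show ?case .
next
  case (Pr n f g)
  from Pr.prems obtain x ys where xs: "xs = x # ys" and l: "length ys = n"
    by (auto split: if_splits list.splits)
  have R: "rec_nat (cv f t ys) (\<lambda>i r. if r = 0 then 0 else cv g t (i # (r - 1) # ys)) x = Suc y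
    \<Longrightarrow> rec_nat (cv f t' ys) (\<lambda>i r. if r = 0 then 0 else cv g t' (i # (r - 1) # ys)) x = Suc y" for y
  proof (induction x arbitrary: y)
    case 0 then show ?case using Pr.IH(1) Pr.prems(2) by simp
  next
    case (Suc x)
    let ?r = "rec_nat (cv f t ys) (\<lambda>i r. if r = 0 then 0 else cv g t (i # (r - 1) # ys)) x"
    from Suc.prems have nz: "?r \<noteq> 0" and gv: "cv g t (x # (?r - 1) # ys) = Suc y"
      by (auto split: if_splits)
    have "?r = Suc (?r - 1)" using nz by simp
    from Suc.IH[OF this] have r': "rec_nat (cv f t' ys) (\<lambda>i r. if r = 0 then 0 else cv g t' (i # (r - 1) # ys)) x = ?r"
      using nz by simp
    have "cv g t' (x # (?r - 1) # ys) = Suc y" using Pr.IH(2) gv Pr.prems(2) by blast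
    then show ?case using r' nz by simp
  qed
  have "rec_nat (cv f t ys) (\<lambda>i r. if r = 0 then 0 else cv g t (i # (r - 1) # ys)) x = Suc y"
    using Pr.prems(1) l by (simp add: xs)
  from R[OF this] show ?case using l by (simp add: xs)
next
  case (Mn n f)
  let ?P = "\<lambda>z. cv f t (z # xs) \<le> 1"
  let ?P' = "\<lambda>z. cv f t' (z # xs) \<le> 1"
  let ?h = "bm ?P t"
  from Mn.prems have l: "length xs = n" and h: "?h < t" and v: "cv f t (?h # xs) = Suc 0" and y: "y = ?h"
    by (auto split: if_splits)
  have v': "cv f t' (?h # xs) = Suc 0" using Mn.IH v Mn.prems(2) by blast
  have below: "\<not> ?P' z" if "z < ?h" for z
  proof -
    have "\<not> ?P z" using that by (rule bm_below)
    then have "cv f t (z # xs) = Suc (cv f t (z # xs) - 1)" "cv f t (z # xs) > 1" by auto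
    then have "cv f t' (z # xs) = cv f t (z # xs)" using Mn.IH Mn.prems(2) by metis
    then show ?thesis using \<open>cv f t (z # xs) > 1\<close> by simp
  qed
  have "bm ?P' t' = ?h" by (rule bm_char) (use v' below h Mn.prems(2) in auto)
  then show ?case using l v' h Mn.prems(2) y by simp
qed

lemma common_bound:
  fixes m :: nat and Q :: "nat \<Rightarrow> nat \<Rightarrow> bool"
  assumes "\<And>i. i < m \<Longrightarrow> \<exists>t. Q i t" "\<And>i t t'. Q i t \<Longrightarrow> t \<le> t' \<Longrightarrow> Q i t'"
  shows "\<exists>T. \<forall>i<m. Q i T"
  using assms(1)
proof (induction m)
  case 0 then show ?case by simp
next
  case (Suc m)
  then obtain T where T: "\<forall>i<m. Q i T" by auto
  obtain t where t: "Q m t" using Suc.prems by auto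
  have "\<forall>i<Suc m. Q i (max T t)"
    using T t assms(2) by (auto simp: less_Suc_eq)
  then show ?case by blast
qed

lemma cv_complete: "rec_eval f xs y \<Longrightarrow> \<exists>t. cv f t xs = Suc y"
proof (induction rule: rec_eval.induct)
  case (ev_Z xs) then show ?case by simp
next
  case (ev_S x) then show ?case by simp
next
  case (ev_Id xs n i) then show ?case by simp
next
  case (ev_Cn xs n gs ys f z)
  have len: "length ys = length gs" using ev_Cn.IH(1) by (simp add: list_all2_lengthD)
  have "\<exists>T. \<forall>i<length gs. cv (gs ! i) T xs = Suc (ys ! i)"
  proof (rule common_bound)
    fix i assume "i < length gs"
    then show "\<exists>t. cv (gs ! i) t xs = Suc (ys ! i)" using ev_Cn.IH(1) by (auto simp: list_all2_conv_all_nth)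
  next
    fix i t t' assume "cv (gs ! i) t xs = Suc (ys ! i)" "t \<le> t'"
    then show "cv (gs ! i) t' xs = Suc (ys ! i)" by (rule cv_mono)
  qed
  then obtain T where T: "\<forall>i<length gs. cv (gs ! i) T xs = Suc (ys ! i)" by blast
  obtain tf where tf: "cv f tf ys = Suc z" using ev_Cn.IH(2) by blast
  let ?T = "max T tf"
  have gT: "\<forall>i<length gs. cv (gs ! i) ?T xs = Suc (ys ! i)"
  proof (intro allI impI)
    fix i assume "i < length gs"
    then have "cv (gs ! i) T xs = Suc (ys ! i)" using T by blast
    then show "cv (gs ! i) ?T xs = Suc (ys ! i)" by (rule cv_mono) simp
  qed
  then have nz: "\<forall>g\<in>set gs. cv g ?T xs \<noteq> 0" by (auto simp: in_set_conv_nth)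
  have "map (\<lambda>g. cv g ?T xs - 1) gs = ys" using gT len by (intro nth_equalityI) auto
  moreover have "cv f ?T ys = Suc z" using tf by (rule cv_mono) simp
  ultimately have "cv (Cn n f gs) ?T xs = Suc z" using nz ev_Cn.hyps(1) by (simp add: cv_Cn)
  then show ?case by blast
next
  case (ev_Pr0 xs n f y g)
  then obtain t where "cv f t xs = Suc y" by blast
  then have "cv (Pr n f g) t (0 # xs) = Suc y" using ev_Pr0.hyps(1) by simp
  then show ?case by blast
next
  case (ev_PrS xs n f g x y z)
  obtain t1 where t1: "cv (Pr n f g) t1 (x # xs) = Suc y" using ev_PrS.IH(1) by blast
  obtain t2 where t2: "cv g t2 (x # y # xs) = Suc z" using ev_PrS.IH(2) by blast
  have a: "cv (Pr n f g) (max t1 t2) (x # xs) = Suc y" using cv_mono[OF t1] by simp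
  have b: "cv g (max t1 t2) (x # y # xs) = Suc z" using cv_mono[OF t2] by simp
  have "cv (Pr n f g) (max t1 t2) (Suc x # xs) = Suc z" using a b ev_PrS.hyps(1) by simp
  then show ?case by blast
next
  case (ev_Mn xs n f y)
  have "\<exists>T. \<forall>z<Suc y. \<exists>v. (z < y \<longrightarrow> v \<noteq> 0) \<and> (z = y \<longrightarrow> v = 0) \<and> cv f T (z # xs) = Suc v"
  proof (rule common_bound)
    fix z assume "z < Suc y"
    then consider "z < y" | "z = y" by linarith
    then show "\<exists>t v. (z < y \<longrightarrow> v \<noteq> 0) \<and> (z = y \<longrightarrow> v = 0) \<and> cv f t (z # xs) = Suc v"
    proof cases
      case 1
      then obtain v where "v \<noteq> 0" "\<exists>t. cv f t (z # xs) = Suc v" using ev_Mn.IH(2) by blast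
      then show ?thesis using 1 by auto
    next
      case 2
      then show ?thesis using ev_Mn.IH(1) by auto
    qed
  next
    fix z t t'
    assume "\<exists>v. (z < y \<longrightarrow> v \<noteq> 0) \<and> (z = y \<longrightarrow> v = 0) \<and> cv f t (z # xs) = Suc v" "t \<le> t'"
    then obtain v where "(z < y \<longrightarrow> v \<noteq> 0) \<and> (z = y \<longrightarrow> v = 0)" "cv f t (z # xs) = Suc v"
      by blast
    moreover from this(2) have "cv f t' (z # xs) = Suc v" by (rule cv_mono) fact
    ultimately show "\<exists>v. (z < y \<longrightarrow> v \<noteq> 0) \<and> (z = y \<longrightarrow> v = 0) \<and> cv f t' (z # xs) = Suc v"
      by blast
  qed
  then obtain T where T: "\<forall>z<Suc y. \<exists>v. (z < y \<longrightarrow> v \<noteq> 0) \<and> (z = y \<longrightarrow> v = 0) \<and> cv f T (z # xs) = Suc v"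
    by blast
  let ?T = "max T (Suc y)"
  have T': "\<forall>z<Suc y. \<exists>v. (z < y \<longrightarrow> v \<noteq> 0) \<and> (z = y \<longrightarrow> v = 0) \<and> cv f ?T (z # xs) = Suc v"
  proof (intro allI impI)
    fix z assume "z < Suc y"
    then obtain v where "(z < y \<longrightarrow> v \<noteq> 0) \<and> (z = y \<longrightarrow> v = 0)" "cv f T (z # xs) = Suc v"
      using T by blast
    moreover from this(2) have "cv f ?T (z # xs) = Suc v" by (rule cv_mono) simp
    ultimately show "\<exists>v. (z < y \<longrightarrow> v \<noteq> 0) \<and> (z = y \<longrightarrow> v = 0) \<and> cv f ?T (z # xs) = Suc v"
      by blast
  qed
  let ?P = "\<lambda>z. cv f ?T (z # xs) \<le> 1"
  have vy: "cv f ?T (y # xs) = 1" using T'[rule_format, of y] by auto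
  have below: "\<not> ?P z" if "z < y" for z using T'[rule_format, of z] that by auto
  have "bm ?P ?T = y" by (rule bm_char) (use vy below in auto)
  then have "cv (Mn n f) ?T xs = Suc y" using vy ev_Mn.hyps(1) by simp
  then show ?case by blast
qed

lemma comp_Cn_list:
  assumes "list_all2 (\<lambda>p P. computes n p P) ps Ps" "computes (length ps) f F"
  shows "computes n (Cn n f ps) (\<lambda>xs. F (map (\<lambda>P. P xs) Ps))"
  by (rule comp_Cn) (use assms in \<open>auto simp: list_all2_conv_all_nth\<close>)

lemma la2_map: "(\<And>g. g \<in> set gs \<Longrightarrow> computes n (pf g) (SF g)) \<Longrightarrow>
   list_all2 (\<lambda>p P. computes n p P) (map pf gs) (map SF gs)"
  by (induction gs) auto

lemma la2_idx: "(\<And>i. i \<in> set is \<Longrightarrow> i < n) \<Longrightarrow>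
   list_all2 (\<lambda>p P. computes n p P) (map (Idf n) is) (map (\<lambda>i xs. xs ! i) is)"
  by (rule la2_map) (simp add: comp_Id)

lemma map_nth_upt: "length ys = k \<Longrightarrow> map (nth ys) [a..<k] = drop a ys"
  by (rule nth_equalityI) auto

lemma map_proj[simp]: "map ((\<lambda>P. P xs) \<circ> (\<lambda>i ys. ys ! i)) is = map (nth xs) is"
  by (simp add: comp_def)

fun allnz :: "nat \<Rightarrow> recf list \<Rightarrow> recf" where
  "allnz n [] = cconst n 1"
| "allnz n (p # ps) = cmul n (csg n p) (allnz n ps)"

lemma comp_allnz: "(\<And>g. g \<in> set gs \<Longrightarrow> computes n (pf g) (SF g)) \<Longrightarrow>
   computes n (allnz n (map pf gs)) (\<lambda>xs. if \<forall>g\<in>set gs. SF g xs \<noteq> 0 then 1 else 0)"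
proof (induction gs)
  case Nil then show ?case using comp_const[of n 1] by simp
next
  case (Cons g gs)
  have "computes n (allnz n (map pf (g # gs)))
     (\<lambda>xs. (if SF g xs = 0 then 0 else 1) * (if \<forall>g\<in>set gs. SF g xs \<noteq> 0 then 1 else 0))"
    using comp_mul[OF comp_sg Cons.IH] Cons.prems by simp
  then show ?case by (rule computes_cong) auto
qed

lemma rec_nat_cong': "(\<And>i r. F i r = G i r) \<Longrightarrow> rec_nat a F x = rec_nat a G x"
  by (induction x) auto

definition prstep :: "nat \<Rightarrow> recf \<Rightarrow> recf" where
  "prstep m G = cmul (m+3) (csg (m+3) (Idf (m+3) 1))
     (Cn (m+3) G ([Idf (m+3) 2, Idf (m+3) 0, cpred (m+3) (Idf (m+3) 1)] @ map (Idf (m+3)) [3..<m+3]))"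

definition bmstep :: "nat \<Rightarrow> recf \<Rightarrow> recf" where
  "bmstep n F = cadd (n+3) (Idf (n+3) 1) (cmul (n+3) (ceq (n+3) (Idf (n+3) 1) (Idf (n+3) 0))
      (cless (n+3) (cconst (n+3) 1) (Cn (n+3) F ([Idf (n+3) 2, Idf (n+3) 0] @ map (Idf (n+3)) [3..<n+3]))))"

definition bmprog :: "nat \<Rightarrow> recf \<Rightarrow> recf" where
  "bmprog n F = Cn (Suc n) (Pr (Suc n) Zf (bmstep n F)) (Idf (Suc n) 0 # map (Idf (Suc n)) [0..<Suc n])"

definition mnprog :: "nat \<Rightarrow> recf \<Rightarrow> recf" where
  "mnprog n F = cmul (Suc n) (cmul (Suc n) (cless (Suc n) (bmprog n F) (Idf (Suc n) 0))
      (ceq (Suc n) (Cn (Suc n) F ([Idf (Suc n) 0, bmprog n F] @ map (Idf (Suc n)) [1..<Suc n])) (cconst (Suc n) 1)))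
      (Cn (Suc n) Sf [bmprog n F])"

primrec Cl :: "recf \<Rightarrow> nat \<Rightarrow> recf" where
  "Cl Zf = (\<lambda>n. cconst (Suc n) 1)"
| "Cl Sf = (\<lambda>n. if n = 1 then Cn 2 Sf [Cn 2 Sf [Idf 2 1]] else Zf)"
| "Cl (Idf m i) = (\<lambda>n. if m = n \<and> i < n then Cn (Suc n) Sf [Idf (Suc n) (Suc i)] else Zf)"
| "Cl (Cn m f gs) = (\<lambda>n. if m = n then cmul (Suc n) (allnz (Suc n) (map (\<lambda>c. c n) (map Cl gs)))
      (Cn (Suc n) (Cl f (length gs)) (Idf (Suc n) 0 # map (\<lambda>c. cpred (Suc n) (c n)) (map Cl gs))) else Zf)"
| "Cl (Pr m f g) = (\<lambda>n. if n = Suc m then Cn (Suc n) (Pr (Suc m) (Cl f m) (prstep m (Cl g (Suc (Suc m)))))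
      (Idf (Suc n) 1 # Idf (Suc n) 0 # map (Idf (Suc n)) [2..<Suc n]) else Zf)"
| "Cl (Mn m f) = (\<lambda>n. if n = m then mnprog n (Cl f (Suc n)) else Zf)"

lemma comp_prstep:
  assumes "computes (Suc (Suc (Suc m))) G (\<lambda>ys. cv g (hd ys) (tl ys))"
  shows "computes (m+3) (prstep m G)
    (\<lambda>zs. (if zs ! 1 = 0 then 0 else 1) * cv g (zs ! 2) (zs ! 0 # (zs ! 1 - 1) # drop 3 zs))"
proof -
  have l: "list_all2 (\<lambda>p P. computes (m+3) p P)
     ([Idf (m+3) 2, Idf (m+3) 0, cpred (m+3) (Idf (m+3) 1)] @ map (Idf (m+3)) [3..<m+3])
     ([\<lambda>xs. xs ! 2, \<lambda>xs. xs ! 0, \<lambda>xs. xs ! 1 - 1] @ map (\<lambda>i xs. xs ! i) [3..<m+3])"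
    by (intro conjI list_all2_appendI list_all2_Cons[THEN iffD2] list_all2_Nil comp_Id comp_pred la2_idx) auto
  have c: "computes (length ([Idf (m+3) 2, Idf (m+3) 0, cpred (m+3) (Idf (m+3) 1)] @ map (Idf (m+3)) [3..<m+3])) G
     (\<lambda>ys. cv g (hd ys) (tl ys))"
  proof -
    have "length ([Idf (m+3) 2, Idf (m+3) 0, cpred (m+3) (Idf (m+3) 1)] @ map (Idf (m+3)) [3..<m+3]) = Suc (Suc (Suc m))"
      by simp
    then show ?thesis using assms by simp
  qed
  show ?thesis unfolding prstep_def
    by (rule computes_cong[OF comp_mul[OF comp_sg[OF comp_Id] comp_Cn_list[OF l c]]])
       (auto simp: map_nth_upt)
qed

lemma rn_bm: "rec_nat 0 (\<lambda>i r. r + (if r = i then 1 else 0) * (if 1 < cv f t (i # xs) then 1 else 0)) j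
   = bm (\<lambda>z. cv f t (z # xs) \<le> 1) j"
  by (induction j) auto

lemma comp_bmprog:
  assumes "computes (Suc (Suc n)) F (\<lambda>ys. cv f (hd ys) (tl ys))"
  shows "computes (Suc n) (bmprog n F) (\<lambda>ys. bm (\<lambda>z. cv f (hd ys) (z # tl ys) \<le> 1) (hd ys))"
proof -
  have l: "list_all2 (\<lambda>p P. computes (n+3) p P)
     ([Idf (n+3) 2, Idf (n+3) 0] @ map (Idf (n+3)) [3..<n+3])
     ([\<lambda>xs. xs ! 2, \<lambda>xs. xs ! 0] @ map (\<lambda>i xs. xs ! i) [3..<n+3])"
    by (intro conjI list_all2_appendI list_all2_Cons[THEN iffD2] list_all2_Nil comp_Id la2_idx) auto
  have c: "computes (length ([Idf (n+3) 2, Idf (n+3) 0] @ map (Idf (n+3)) [3..<n+3])) F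
     (\<lambda>ys. cv f (hd ys) (tl ys))"
  proof -
    have "length ([Idf (n+3) 2, Idf (n+3) 0] @ map (Idf (n+3)) [3..<n+3]) = Suc (Suc n)"
      by simp
    then show ?thesis using assms by simp
  qed
  have st: "computes (n+3) (bmstep n F) (\<lambda>zs. zs ! 1 + (if zs ! 1 = zs ! 0 then 1 else 0) *
      (if 1 < cv f (zs ! 2) (zs ! 0 # drop 3 zs) then 1 else 0))"
    unfolding bmstep_def
    by (rule computes_cong[OF comp_add[OF comp_Id comp_mul[OF comp_eq[OF comp_Id comp_Id]
          comp_less[OF comp_const comp_Cn_list[OF l c]]]]]) (auto simp: map_nth_upt)
  have pr: "computes (Suc (Suc n)) (Pr (Suc n) Zf (bmstep n F))
     (\<lambda>ws. rec_nat 0 (\<lambda>i r. r + (if r = i then 1 else 0) * (if 1 < cv f (hd (tl ws)) (i # tl (tl ws)) then 1 else 0)) (hd ws))"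
  proof (rule computes_cong[OF comp_PrI[OF comp_Z st]])
    fix ws :: "nat list" assume "length ws = Suc (Suc n)"
    then obtain a b cs where ws: "ws = a # b # cs" by (auto simp: length_Suc_conv)
    show "rec_nat 0 (\<lambda>i r. (i # r # tl ws) ! 1 + (if (i # r # tl ws) ! 1 = (i # r # tl ws) ! 0 then 1 else 0) *
          (if 1 < cv f ((i # r # tl ws) ! 2) ((i # r # tl ws) ! 0 # drop 3 (i # r # tl ws)) then 1 else 0)) (hd ws) =
        rec_nat 0 (\<lambda>i r. r + (if r = i then 1 else 0) * (if 1 < cv f (hd (tl ws)) (i # tl (tl ws)) then 1 else 0)) (hd ws)"
      by (rule rec_nat_cong') (simp add: ws numeral_3_eq_3 numeral_2_eq_2)
  qed auto
  have l2: "list_all2 (\<lambda>p P. computes (Suc n) p P) (Idf (Suc n) 0 # map (Idf (Suc n)) [0..<Suc n])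
      ((\<lambda>xs. xs ! 0) # map (\<lambda>i xs. xs ! i) [0..<Suc n])"
    by (intro conjI list_all2_Cons[THEN iffD2] comp_Id la2_idx) auto
  show ?thesis unfolding bmprog_def
  proof (rule computes_cong[OF comp_Cn_list[OF l2]])
    show "computes (length (Idf (Suc n) 0 # map (Idf (Suc n)) [0..<Suc n])) (Pr (Suc n) Zf (bmstep n F))
      (\<lambda>ws. rec_nat 0 (\<lambda>i r. r + (if r = i then 1 else 0) * (if 1 < cv f (hd (tl ws)) (i # tl (tl ws)) then 1 else 0)) (hd ws))"
      using pr by simp
  next
    fix ys :: "nat list" assume len: "length ys = Suc n"
    have m: "map (\<lambda>P. P ys) ((\<lambda>xs. xs ! 0) # map (\<lambda>i xs. xs ! i) [0..<Suc n]) = ys ! 0 # ys"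
      using map_nth_upt[OF len, of 0] by (simp del: upt_Suc)
    obtain y zs where ys: "ys = y # zs" using len by (cases ys) auto
    show "rec_nat 0 (\<lambda>i r. r + (if r = i then 1 else 0) * (if 1 < cv f (hd (tl (map (\<lambda>P. P ys) ((\<lambda>xs. xs ! 0) # map (\<lambda>i xs. xs ! i) [0..<Suc n]))))
        (i # tl (tl (map (\<lambda>P. P ys) ((\<lambda>xs. xs ! 0) # map (\<lambda>i xs. xs ! i) [0..<Suc n])))) then 1 else 0))
        (hd (map (\<lambda>P. P ys) ((\<lambda>xs. xs ! 0) # map (\<lambda>i xs. xs ! i) [0..<Suc n]))) =
      bm (\<lambda>z. cv f (hd ys) (z # tl ys) \<le> 1) (hd ys)"
      unfolding m by (simp only: ys rn_bm list.sel nth_Cons_0)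
  qed
qed

lemma nth0_hd: "length xs = Suc n \<Longrightarrow> xs ! 0 = hd xs"
  by (cases xs) auto

lemma comp_mnprog:
  assumes "computes (Suc (Suc n)) F (\<lambda>ys. cv f (hd ys) (tl ys))"
  shows "computes (Suc n) (mnprog n F) (\<lambda>ys. cv (Mn n f) (hd ys) (tl ys))"
proof -
  let ?B = "\<lambda>ys. bm (\<lambda>z. cv f (hd ys) (z # tl ys) \<le> 1) (hd ys)"
  have b: "computes (Suc n) (bmprog n F) ?B" by (rule comp_bmprog[OF assms])
  have l: "list_all2 (\<lambda>p P. computes (Suc n) p P) ([Idf (Suc n) 0, bmprog n F] @ map (Idf (Suc n)) [1..<Suc n])
      ([\<lambda>xs. xs ! 0, ?B] @ map (\<lambda>i xs. xs ! i) [1..<Suc n])"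
    by (intro conjI list_all2_appendI list_all2_Cons[THEN iffD2] list_all2_Nil comp_Id la2_idx b) auto
  have c: "computes (length ([Idf (Suc n) 0, bmprog n F] @ map (Idf (Suc n)) [1..<Suc n])) F
     (\<lambda>ys. cv f (hd ys) (tl ys))"
  proof -
    have "length ([Idf (Suc n) 0, bmprog n F] @ map (Idf (Suc n)) [1..<Suc n]) = Suc (Suc n)" by simp
    then show ?thesis using assms by simp
  qed
  have "computes (Suc n) (mnprog n F) (\<lambda>xs. (if ?B xs < xs ! 0 then 1 else 0) *
     (if cv f (hd (map (\<lambda>P. P xs) ([\<lambda>xs. xs ! 0, ?B] @ map (\<lambda>i xs. xs ! i) [1..<Suc n])))
        (tl (map (\<lambda>P. P xs) ([\<lambda>xs. xs ! 0, ?B] @ map (\<lambda>i xs. xs ! i) [1..<Suc n]))) = 1 then 1 else 0) *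
     Suc (hd [?B xs]))"
    unfolding mnprog_def
    by (rule comp_mul[OF comp_mul[OF comp_less[OF b comp_Id] comp_eq[OF comp_Cn_list[OF l c] comp_const]]
        comp_Cn1[OF comp_S b]]) simp
  then show ?thesis
  proof (rule computes_cong)
    fix ys :: "nat list" assume len: "length ys = Suc n"
    obtain t xs where ys: "ys = t # xs" using len by (cases ys) auto
    have lx: "length xs = n" using len ys by simp
    have m: "map (nth ys) [1..<Suc n] = xs" using map_nth_upt[OF len, of 1] ys by simp
    show "(if ?B ys < ys ! 0 then 1 else 0) *
     (if cv f (hd (map (\<lambda>P. P ys) ([\<lambda>xs. xs ! 0, ?B] @ map (\<lambda>i xs. xs ! i) [1..<Suc n])))
        (tl (map (\<lambda>P. P ys) ([\<lambda>xs. xs ! 0, ?B] @ map (\<lambda>i xs. xs ! i) [1..<Suc n]))) = 1 then 1 else 0) *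
     Suc (hd [?B ys]) = cv (Mn n f) (hd ys) (tl ys)"
      using m lx by (simp add: ys del: upt_Suc)
  qed
qed

lemma comp_Cl: "computes (Suc n) (Cl f n) (\<lambda>ys. cv f (hd ys) (tl ys))"
proof (induction f arbitrary: n)
  case Zf
  show ?case unfolding Cl.simps by (rule computes_cong[OF comp_const]) simp
next
  case Sf
  show ?case
  proof (cases "n = 1")
    case True
    have "computes 2 (Cn 2 Sf [Cn 2 Sf [Idf 2 1]]) (\<lambda>xs. Suc (hd [Suc (hd [xs ! 1])]))"
      by (rule comp_Cn1[OF comp_S comp_Cn1[OF comp_S comp_Id]]) simp
    then show ?thesis using True
      by (auto elim!: computes_cong simp: length_Suc_conv numeral_2_eq_2)
  next
    case False
    then show ?thesis by (auto intro!: computes_cong[OF comp_Z] simp: length_Suc_conv)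
  qed
next
  case (Idf m i)
  show ?case
  proof (cases "m = n \<and> i < n")
    case True
    have "computes (Suc n) (Cn (Suc n) Sf [Idf (Suc n) (Suc i)]) (\<lambda>xs. Suc (hd [xs ! Suc i]))"
      by (rule comp_Cn1[OF comp_S comp_Id]) (use True in simp)
    then show ?thesis using True
      by (auto elim!: computes_cong simp: length_Suc_conv)
  next
    case False
    then show ?thesis by (auto intro!: computes_cong[OF comp_Z] simp: length_Suc_conv)
  qed
next
  case (Cn m f gs)
  show ?case
  proof (cases "m = n")
    case True
    let ?S = "\<lambda>g ys. cv g (hd ys) (tl ys)"
    have a: "computes (Suc n) (allnz (Suc n) (map (\<lambda>g. Cl g n) gs))
       (\<lambda>xs. if \<forall>g\<in>set gs. ?S g xs \<noteq> 0 then 1 else 0)"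
      by (rule comp_allnz) (rule Cn.IH(2))
    have l: "list_all2 (\<lambda>p P. computes (Suc n) p P) (Idf (Suc n) 0 # map (\<lambda>g. cpred (Suc n) (Cl g n)) gs)
       ((\<lambda>xs. xs ! 0) # map (\<lambda>g xs. ?S g xs - 1) gs)"
      by (intro conjI list_all2_Cons[THEN iffD2] comp_Id la2_map comp_pred Cn.IH(2)) auto
    have c: "computes (length (Idf (Suc n) 0 # map (\<lambda>g. cpred (Suc n) (Cl g n)) gs)) (Cl f (length gs))
       (\<lambda>ys. cv f (hd ys) (tl ys))" using Cn.IH(1) by simp
    have "computes (Suc n) (Cl (Cn m f gs) n) (\<lambda>xs. (if \<forall>g\<in>set gs. ?S g xs \<noteq> 0 then 1 else 0) *
       cv f (hd (map (\<lambda>P. P xs) ((\<lambda>xs. xs ! 0) # map (\<lambda>g xs. ?S g xs - 1) gs)))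
          (tl (map (\<lambda>P. P xs) ((\<lambda>xs. xs ! 0) # map (\<lambda>g xs. ?S g xs - 1) gs))))"
      using comp_mul[OF a comp_Cn_list[OF l c]] True by (simp add: comp_def)
    then show ?thesis
      by (rule computes_cong) (auto simp: cv_Cn True comp_def nth0_hd)
  next
    case False
    then show ?thesis by (auto intro!: computes_cong[OF comp_Z] simp: length_Suc_conv cv_Cn)
  qed
next
  case (Pr m f g)
  show ?case
  proof (cases "n = Suc m")
    case True
    have st: "computes (m+3) (prstep m (Cl g (Suc (Suc m))))
      (\<lambda>zs. (if zs ! 1 = 0 then 0 else 1) * cv g (zs ! 2) (zs ! 0 # (zs ! 1 - 1) # drop 3 zs))"
      by (rule comp_prstep) (rule Pr.IH(2))
    have pr: "computes (Suc (Suc m)) (Pr (Suc m) (Cl f m) (prstep m (Cl g (Suc (Suc m)))))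
      (\<lambda>ws. rec_nat (cv f (hd (tl ws)) (tl (tl ws)))
         (\<lambda>i r. if r = 0 then 0 else cv g (hd (tl ws)) (i # (r - 1) # tl (tl ws))) (hd ws))"
    proof (rule computes_cong[OF comp_PrI[OF Pr.IH(1) st]])
      fix ws :: "nat list" assume "length ws = Suc (Suc m)"
      then obtain a b cs where ws: "ws = a # b # cs" by (auto simp: length_Suc_conv)
      show "rec_nat (cv f (hd (tl ws)) (tl (tl ws)))
          (\<lambda>i r. (if (i # r # tl ws) ! 1 = 0 then 0 else 1) * cv g ((i # r # tl ws) ! 2)
             ((i # r # tl ws) ! 0 # ((i # r # tl ws) ! 1 - 1) # drop 3 (i # r # tl ws))) (hd ws) =
        rec_nat (cv f (hd (tl ws)) (tl (tl ws)))
         (\<lambda>i r. if r = 0 then 0 else cv g (hd (tl ws)) (i # (r - 1) # tl (tl ws))) (hd ws)"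
        by (rule rec_nat_cong') (simp add: ws numeral_3_eq_3 numeral_2_eq_2)
    qed auto
    have l: "list_all2 (\<lambda>p P. computes (Suc n) p P) (Idf (Suc n) 1 # Idf (Suc n) 0 # map (Idf (Suc n)) [2..<Suc n])
      ((\<lambda>xs. xs ! 1) # (\<lambda>xs. xs ! 0) # map (\<lambda>i xs. xs ! i) [2..<Suc n])"
      by (intro conjI list_all2_Cons[THEN iffD2] comp_Id la2_idx) (auto simp: True)
    have c: "computes (length (Idf (Suc n) 1 # Idf (Suc n) 0 # map (Idf (Suc n)) [2..<Suc n]))
       (Pr (Suc m) (Cl f m) (prstep m (Cl g (Suc (Suc m)))))
      (\<lambda>ws. rec_nat (cv f (hd (tl ws)) (tl (tl ws)))
         (\<lambda>i r. if r = 0 then 0 else cv g (hd (tl ws)) (i # (r - 1) # tl (tl ws))) (hd ws))"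
    proof -
      have "length (Idf (Suc n) 1 # Idf (Suc n) 0 # map (Idf (Suc n)) [2..<Suc n]) = Suc (Suc m)"
        using True by (simp del: upt_Suc)
      then show ?thesis using pr by simp
    qed
    have e: "Cl (Pr m f g) n = Cn (Suc n) (Pr (Suc m) (Cl f m) (prstep m (Cl g (Suc (Suc m)))))
      (Idf (Suc n) 1 # Idf (Suc n) 0 # map (Idf (Suc n)) [2..<Suc n])" using True by simp
    show ?thesis unfolding e
      apply (rule computes_cong[OF comp_Cn_list[OF l c]])
      subgoal premises p for ys
      proof -
        have len: "length ys = Suc n" by (rule p)
        then obtain t x zs where ys: "ys = t # x # zs" using True by (auto simp: length_Suc_conv)
        have lz: "length zs = m" using len ys True by simp
        have m: "map (nth ys) [2..<Suc n] = zs" using map_nth_upt[OF len, of 2] ys by simp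
        show ?thesis using m lz by (simp add: ys del: upt_Suc cong: if_cong)
      qed
      done
  next
    case False
    then show ?thesis by (auto intro!: computes_cong[OF comp_Z] simp: length_Suc_conv split: list.splits)
  qed
next
  case (Mn m f)
  show ?case
  proof (cases "n = m")
    case True
    then show ?thesis using comp_mnprog[OF Mn.IH] by simp
  next
    case False
    then show ?thesis by (auto intro!: computes_cong[OF comp_Z] simp: length_Suc_conv)
  qed
qed

definition "tri1 = Pr 0 Zf (Cn 2 add2 [Cn 2 Sf [Idf 2 0], Idf 2 1])"

lemma rn_tri: "rec_nat 0 (\<lambda>i r. Suc (i + r)) x = triangle x"
  by (induction x) auto

lemma comp_tri1: "computes 1 tri1 (\<lambda>xs. triangle (xs ! 0))"
proof -
  have b: "computes 2 (Cn 2 add2 [Cn 2 Sf [Idf 2 0], Idf 2 1]) (\<lambda>xs. [Suc (hd [xs ! 0]), xs ! 1] ! 0 + [Suc (hd [xs ! 0]), xs ! 1] ! 1)"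
    by (rule comp_Cn2[OF comp_add2 comp_Cn1[OF comp_S comp_Id] comp_Id]) simp_all
  show ?thesis unfolding tri1_def
    by (rule computes_cong[OF comp_PrI[OF comp_Z b]]) (auto simp: rn_tri length_Suc_conv)
qed

definition "ctri n p = Cn n tri1 [p]"
lemma comp_tri: "computes n p P \<Longrightarrow> computes n (ctri n p) (\<lambda>xs. triangle (P xs))"
  unfolding ctri_def using comp_Cn1[OF comp_tri1] by simp

definition dd :: "nat \<Rightarrow> nat" where "dd s = (LEAST d. s < triangle (Suc d))"

lemma triangle_ge: "n \<le> triangle n"
  by (induction n) auto

lemma dd_ex: "s < triangle (Suc s)"
  using triangle_ge[of s] by simp

lemma dd_props: "s < triangle (Suc (dd s))" "triangle (dd s) \<le> s"
proof -
  show "s < triangle (Suc (dd s))" unfolding dd_def by (rule LeastI[of _ s]) (rule dd_ex)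
  show "triangle (dd s) \<le> s"
  proof (cases "dd s")
    case 0 then show ?thesis by simp
  next
    case (Suc d)
    then have "\<not> s < triangle (Suc d)" unfolding dd_def using not_less_Least[of d] Suc
      by (metis dd_def lessI)
    then show ?thesis using Suc by simp
  qed
qed

lemma prod_decode_dd: "prod_decode s = (s - triangle (dd s), dd s - (s - triangle (dd s)))"
proof -
  let ?a = "s - triangle (dd s)" and ?b = "dd s - (s - triangle (dd s))"
  have "s < triangle (dd s) + Suc (dd s)" using dd_props(1)[of s] by simp
  then have "?a \<le> dd s" by linarith
  then have "prod_encode (?a, ?b) = s" using dd_props(2) by (simp add: prod_encode_def)
  then show ?thesis by (metis prod_encode_inverse)
qed

definition "dec1 = Mn 1 (cnot 2 (cless 2 (Idf 2 1) (ctri 2 (Cn 2 Sf [Idf 2 0]))))"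

lemma comp_dec1: "computes 1 dec1 (\<lambda>xs. dd (xs ! 0))"
proof -
  have f0: "computes 2 (cnot 2 (cless 2 (Idf 2 1) (ctri 2 (Cn 2 Sf [Idf 2 0]))))
     (\<lambda>xs. if (if xs ! 1 < triangle (Suc (hd [xs ! 0])) then 1 else 0) = (0::nat) then 1 else 0)"
    by (rule computes_cong[OF comp_not[OF comp_less[OF comp_Id comp_tri[OF comp_Cn1[OF comp_S comp_Id]]]]]) simp_all
  have f: "computes (Suc 1) (cnot 2 (cless 2 (Idf 2 1) (ctri 2 (Cn 2 Sf [Idf 2 0]))))
     (\<lambda>xs. if (if xs ! 1 < triangle (Suc (hd [xs ! 0])) then 1 else 0) = (0::nat) then 1 else 0)"
    using f0 by (simp add: numeral_2_eq_2)
  show ?thesis unfolding dec1_def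
  proof (rule computes_cong[OF comp_Mn[OF f]])
    fix xs :: "nat list" assume "length xs = 1"
    show "\<exists>y. (if (if (y # xs) ! 1 < triangle (Suc (hd [(y # xs) ! 0])) then 1 else 0) = (0::nat) then 1 else 0) = (0::nat)"
      by (rule exI[of _ "xs ! 0"]) (simp add: dd_ex)
  next
    fix xs :: "nat list" assume "length xs = 1"
    show "(LEAST y. (if (if (y # xs) ! 1 < triangle (Suc (hd [(y # xs) ! 0])) then 1 else 0) = (0::nat) then 1 else 0) = (0::nat))
       = dd (xs ! 0)" by (simp add: dd_def)
  qed
qed

definition "pfst1 = csub 1 (Idf 1 0) (ctri 1 dec1)"
definition "psnd1 = csub 1 dec1 pfst1"

lemma comp_pfst1: "computes 1 pfst1 (\<lambda>xs. fst (prod_decode (xs ! 0)))"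
  unfolding pfst1_def
  by (rule computes_cong[OF comp_sub[OF comp_Id comp_tri[OF comp_dec1]]]) (auto simp: prod_decode_dd)

lemma comp_psnd1: "computes 1 psnd1 (\<lambda>xs. snd (prod_decode (xs ! 0)))"
  unfolding psnd1_def
  by (rule computes_cong[OF comp_sub[OF comp_dec1 comp_pfst1]]) (auto simp: prod_decode_dd)

definition hdc :: "nat \<Rightarrow> nat" where "hdc c = fst (prod_decode (c - 1))"
definition tlc :: "nat \<Rightarrow> nat" where "tlc c = snd (prod_decode (c - 1))"
definition consc :: "nat \<Rightarrow> nat \<Rightarrow> nat" where "consc x r = Suc (prod_encode (x, r))"

lemma hdc_enc[simp]: "hdc (list_encode (x # xs)) = x" by (simp add: hdc_def)
lemma tlc_enc[simp]: "tlc (list_encode (x # xs)) = list_encode xs" by (simp add: tlc_def)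
lemma consc_enc[simp]: "consc x (list_encode xs) = list_encode (x # xs)" by (simp add: consc_def)
lemma tlc_0[simp]: "tlc 0 = 0" by (simp add: tlc_def prod_decode_def prod_decode_aux.simps)

definition "chd n p = Cn n pfst1 [cpred n p]"
definition "ctl n p = Cn n psnd1 [cpred n p]"
definition "ccons n p q = Cn n Sf [cadd n (ctri n (cadd n p q)) p]"

lemma comp_hd: "computes n p P \<Longrightarrow> computes n (chd n p) (\<lambda>xs. hdc (P xs))"
  unfolding chd_def hdc_def using comp_Cn1[OF comp_pfst1 comp_pred] by simp
lemma comp_tl: "computes n p P \<Longrightarrow> computes n (ctl n p) (\<lambda>xs. tlc (P xs))"
  unfolding ctl_def tlc_def using comp_Cn1[OF comp_psnd1 comp_pred] by simp
lemma comp_cons: "computes n p P \<Longrightarrow> computes n q Q \<Longrightarrow> computes n (ccons n p q) (\<lambda>xs. consc (P xs) (Q xs))"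
  unfolding ccons_def consc_def prod_encode_def
  using comp_Cn1[OF comp_S comp_add[OF comp_tri[OF comp_add] ]] by simp

definition "par1 = Pr 0 Zf (cnot 2 (Idf 2 1))"
lemma rn_par: "rec_nat 0 (\<lambda>i r. if r = 0 then 1 else 0) x = x mod 2"
  by (induction x) (auto simp: mod_Suc)
lemma comp_par1: "computes 1 par1 (\<lambda>xs. xs ! 0 mod 2)"
proof -
  have b: "computes 2 (cnot 2 (Idf 2 1)) (\<lambda>xs. if xs ! 1 = 0 then 1 else 0)"
    by (rule comp_not[OF comp_Id]) simp
  show ?thesis unfolding par1_def
    by (rule computes_cong[OF comp_PrI[OF comp_Z b]]) (auto simp: rn_par length_Suc_conv)
qed

definition invc :: "nat \<Rightarrow> nat" where "invc l = (if l mod 2 = 0 then Suc l else l - 1)"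
definition "cinv n p = cif n (Cn n par1 [p]) (cpred n p) (Cn n Sf [p])"
lemma comp_inv: "computes n p P \<Longrightarrow> computes n (cinv n p) (\<lambda>xs. invc (P xs))"
  unfolding cinv_def invc_def
  by (rule computes_cong[OF comp_if[OF comp_Cn1[OF comp_par1] comp_pred comp_Cn1[OF comp_S]]]) auto

definition "modk1 K = Pr 0 Zf (cmul 2 (Cn 2 Sf [Idf 2 1]) (cnot 2 (ceq 2 (Cn 2 Sf [Idf 2 1]) (cconst 2 K))))"
lemma rn_mod: "0 < K \<Longrightarrow> rec_nat 0 (\<lambda>i r. Suc r * (if Suc r = K then 0 else 1)) x = x mod K"
  by (induction x) (auto simp: mod_Suc)
lemma comp_modk1: "0 < K \<Longrightarrow> computes 1 (modk1 K) (\<lambda>xs. xs ! 0 mod K)"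
proof -
  assume K: "0 < K"
  have b: "computes 2 (cmul 2 (Cn 2 Sf [Idf 2 1]) (cnot 2 (ceq 2 (Cn 2 Sf [Idf 2 1]) (cconst 2 K))))
     (\<lambda>xs. Suc (hd [xs ! 1]) * (if (if Suc (hd [xs ! 1]) = K then 1 else 0) = (0::nat) then 1 else 0))"
    by (rule computes_cong[OF comp_mul[OF comp_Cn1[OF comp_S comp_Id] comp_not[OF comp_eq[OF comp_Cn1[OF comp_S comp_Id] comp_const]]]]) simp_all
  show ?thesis unfolding modk1_def
    by (rule computes_cong[OF comp_PrI[OF comp_Z b]]) (use K in \<open>auto simp: rn_mod[symmetric] length_Suc_conv intro!: rec_nat_cong'\<close>)
qed

definition cccf :: "nat \<Rightarrow> nat \<Rightarrow> nat" where
  "cccf l a = (if a \<noteq> 0 \<and> hdc a = invc l then tlc a else consc l a)"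

definition "cccp n p q = cif n (cmul n (csg n q) (ceq n (chd n q) (cinv n p))) (ctl n q) (ccons n p q)"
lemma comp_ccc: "computes n p P \<Longrightarrow> computes n q Q \<Longrightarrow> computes n (cccp n p q) (\<lambda>xs. cccf (P xs) (Q xs))"
  unfolding cccp_def cccf_def
  by (rule computes_cong[OF comp_if[OF comp_mul[OF comp_sg comp_eq[OF comp_hd comp_inv]] comp_tl comp_cons]]) auto

abbreviation cc where "cc \<equiv> cancel_cons"

lemma inv_inv[simp]: "inv_letter (inv_letter a) = a"
  by (simp add: inv_letter_def)
lemma inv_neq[simp]: "inv_letter a \<noteq> a"
  by (cases a) (simp add: inv_letter_def)

lemma reduced_Cons: "reduced (a # w) \<longleftrightarrow> reduced w \<and> (w = [] \<or> hd w \<noteq> inv_letter a)"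
  by (cases w) auto

lemma reduced_cc: "reduced w \<Longrightarrow> reduced (cc a w)"
  by (cases w) (auto simp: cancel_cons_def reduced_Cons)

lemma reduced_foldr: "reduced v \<Longrightarrow> reduced (foldr cc z v)"
  by (induction z) (auto intro: reduced_cc)

lemma reduced_reduce: "reduced (reduce z)"
  unfolding reduce_def by (rule reduced_foldr) simp

lemma cc_inv: "reduced w \<Longrightarrow> cc a (cc (inv_letter a) w) = w"
proof (cases w)
  case Nil then show ?thesis by (simp add: cancel_cons_def)
next
  case (Cons b w')
  assume r: "reduced w"
  show ?thesis
  proof (cases "b = a")
    case True
    then show ?thesis using r Cons by (cases w') (auto simp: cancel_cons_def)
  next
    case False
    then show ?thesis using Cons by (auto simp: cancel_cons_def)
  qed
qed

lemma cc_inv': "reduced w \<Longrightarrow> cc (inv_letter a) (cc a w) = w"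
  using cc_inv[of w "inv_letter a"] by simp

lemma foldr_cc_cc: "reduced r \<Longrightarrow> reduced v \<Longrightarrow> foldr cc (cc a r) v = cc a (foldr cc r v)"
proof (cases r)
  case Nil then show ?thesis by (simp add: cancel_cons_def)
next
  case (Cons b r')
  assume rr: "reduced r" and rv: "reduced v"
  show ?thesis
  proof (cases "b = inv_letter a")
    case True
    then have "cc a r = r'" using Cons by (simp add: cancel_cons_def)
    moreover have "cc a (foldr cc r v) = foldr cc r' v"
      using Cons True cc_inv[OF reduced_foldr[OF rv], of a r'] by simp
    ultimately show ?thesis by simp
  next
    case False
    then show ?thesis using Cons by (simp add: cancel_cons_def)
  qed
qed

lemma foldr_reduce: "reduced v \<Longrightarrow> foldr cc (reduce z) v = foldr cc z v"
proof (induction z)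
  case Nil then show ?case by (simp add: reduce_def)
next
  case (Cons a z)
  have "foldr cc (reduce (a # z)) v = foldr cc (cc a (reduce z)) v" by (simp add: reduce_def)
  also have "\<dots> = cc a (foldr cc (reduce z) v)" by (rule foldr_cc_cc[OF reduced_reduce Cons.prems])
  finally show ?case using Cons by simp
qed

lemma reduce_id: "reduced w \<Longrightarrow> reduce w = w"
proof (induction w)
  case Nil then show ?case by (simp add: reduce_def)
next
  case (Cons a w)
  then have "reduce w = w" by (simp add: reduced_Cons)
  then have "reduce (a # w) = cc a w" by (simp add: reduce_def)
  then show ?case using Cons.prems by (cases w) (auto simp: cancel_cons_def)
qed

lemma fg_mult_foldr: "reduced v \<Longrightarrow> fg_mult u v = foldr cc u v"
  unfolding fg_mult_def using reduce_id[of v] by (simp add: reduce_def)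

lemma reduced_fg_mult: "reduced (fg_mult u v)"
  unfolding fg_mult_def by (rule reduced_reduce)

lemma fg_assoc: "reduced v \<Longrightarrow> reduced w \<Longrightarrow> fg_mult (fg_mult u v) w = fg_mult u (fg_mult v w)"
proof -
  assume v: "reduced v" and w: "reduced w"
  have "fg_mult (fg_mult u v) w = foldr cc (reduce (u @ v)) w" using fg_mult_foldr[OF w, of "fg_mult u v"] by (simp add: fg_mult_def)
  also have "\<dots> = foldr cc (u @ v) w" by (rule foldr_reduce[OF w])
  also have "\<dots> = foldr cc u (foldr cc v w)" by simp
  also have "\<dots> = fg_mult u (fg_mult v w)"
    using fg_mult_foldr[OF w, of v] fg_mult_foldr[OF reduced_fg_mult, of u v w] by simp
  finally show ?thesis .
qed

definition fginv :: "letter list \<Rightarrow> letter list" where "fginv w = rev (map inv_letter w)"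

lemma foldr_inv_cancel: "reduced v \<Longrightarrow> foldr cc (fginv z @ z) v = v"
proof (induction z arbitrary: v)
  case Nil then show ?case by (simp add: fginv_def)
next
  case (Cons a z)
  have "foldr cc (fginv (a # z) @ a # z) v = foldr cc (fginv z) (cc (inv_letter a) (cc a (foldr cc z v)))"
    by (simp add: fginv_def)
  also have "\<dots> = foldr cc (fginv z) (foldr cc z v)" using cc_inv'[OF reduced_foldr[OF Cons.prems]] by simp
  also have "\<dots> = v" using Cons by simp
  finally show ?case .
qed

lemma fginv_fginv[simp]: "fginv (fginv w) = w"
  by (simp add: fginv_def rev_map comp_def)

lemma left_cancel: "reduced u \<Longrightarrow> foldr cc (fginv w) (foldr cc w u) = u"
  using foldr_inv_cancel[of u w] by simp

lemma right_cancel: "reduced u \<Longrightarrow> reduced w \<Longrightarrow> reduce (fg_mult u w @ fginv w) = u"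
proof -
  assume u: "reduced u" and w: "reduced w"
  have "reduce (fg_mult u w @ fginv w) = foldr cc (fg_mult u w) (reduce (fginv w))"
    by (simp add: reduce_def)
  also have "\<dots> = foldr cc (u @ w) (reduce (fginv w))"
    unfolding fg_mult_def by (rule foldr_reduce[OF reduced_reduce])
  also have "\<dots> = foldr cc u (foldr cc (w @ fginv w) [])" by (simp add: reduce_def)
  also have "foldr cc (w @ fginv w) [] = []" using foldr_inv_cancel[of "[]" "fginv w"] by simp
  finally show ?thesis using reduce_id[OF u] by (simp add: reduce_def)
qed

lemma set_cc: "set (cc a w) \<subseteq> insert a (set w)"
  by (cases w) (auto simp: cancel_cons_def)

lemma set_foldr_cc: "set (foldr cc z v) \<subseteq> set z \<union> set v"
  by (induction z) (use set_cc in fastforce)+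

lemma fgw_mult: "u \<in> free_group_words k \<Longrightarrow> v \<in> free_group_words k \<Longrightarrow> fg_mult u v \<in> free_group_words k"
  unfolding free_group_words_def fg_mult_def reduce_def
  using reduced_reduce[of "u @ v"] set_foldr_cc[of "u @ v" "[]"] by (auto simp: reduce_def)

lemma fgw_reduce: "\<forall>l\<in>set z. fst l < k \<Longrightarrow> reduce z \<in> free_group_words k"
  unfolding free_group_words_def using reduced_reduce[of z] set_foldr_cc[of z "[]"] by (auto simp: reduce_def)

locale gctx =
  fixes G :: "('g, 'b) monoid_scheme" and k :: nat and x :: "nat \<Rightarrow> 'g"
  assumes grp: "group G" and xc: "x ` {..<k} \<subseteq> carrier G"
begin

lemma lv_carrier: "fst l < k \<Longrightarrow> letter_val G x l \<in> carrier G"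
  using xc group.inv_closed[OF grp] by (auto simp: letter_val_def)

lemma wv_carrier: "\<forall>l\<in>set w. fst l < k \<Longrightarrow> word_val G x w \<in> carrier G"
  by (induction w) (auto simp: word_val_def lv_carrier group.is_monoid[OF grp] intro: monoid.m_closed[OF group.is_monoid[OF grp]])

lemma wv_Cons: "word_val G x (a # w) = letter_val G x a \<otimes>\<^bsub>G\<^esub> word_val G x w"
  by (simp add: word_val_def)

lemma lv_inv: "fst a < k \<Longrightarrow> letter_val G x a \<otimes>\<^bsub>G\<^esub> letter_val G x (inv_letter a) = \<one>\<^bsub>G\<^esub>"
  using xc grp by (auto simp: letter_val_def inv_letter_def group.r_inv group.l_inv)

lemma wv_cc: "fst a < k \<Longrightarrow> \<forall>l\<in>set w. fst l < k \<Longrightarrow>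
    word_val G x (cc a w) = letter_val G x a \<otimes>\<^bsub>G\<^esub> word_val G x w"
proof (cases w)
  case Nil then show ?thesis by (simp add: cancel_cons_def wv_Cons)
next
  case (Cons b w')
  assume a: "fst a < k" and ws: "\<forall>l\<in>set w. fst l < k"
  show ?thesis
  proof (cases "b = inv_letter a")
    case True
    have c1: "letter_val G x a \<in> carrier G" using a lv_carrier by simp
    have c2: "letter_val G x b \<in> carrier G" using ws Cons lv_carrier by simp
    have c3: "word_val G x w' \<in> carrier G" using ws Cons wv_carrier by simp
    have "letter_val G x a \<otimes>\<^bsub>G\<^esub> word_val G x w =
        (letter_val G x a \<otimes>\<^bsub>G\<^esub> letter_val G x b) \<otimes>\<^bsub>G\<^esub> word_val G x w'"
      using Cons c1 c2 c3 by (simp add: wv_Cons group.is_monoid[OF grp] monoid.m_assoc)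
    also have "\<dots> = word_val G x w'" using True lv_inv[OF a] c3 grp by (simp add: group.is_monoid monoid.l_one)
    finally show ?thesis using Cons True by (simp add: cancel_cons_def)
  next
    case False
    then show ?thesis using Cons by (simp add: cancel_cons_def wv_Cons)
  qed
qed

lemma wv_foldr: "\<forall>l\<in>set z. fst l < k \<Longrightarrow> \<forall>l\<in>set v. fst l < k \<Longrightarrow>
   word_val G x (foldr cc z v) = word_val G x z \<otimes>\<^bsub>G\<^esub> word_val G x v"
proof (induction z)
  case Nil then show ?case using wv_carrier grp by (simp add: word_val_def group.is_monoid monoid.l_one)
next
  case (Cons a z)
  have s: "\<forall>l\<in>set (foldr cc z v). fst l < k" using Cons.prems set_foldr_cc[of z v] by auto
  have "word_val G x (foldr cc (a # z) v) = letter_val G x a \<otimes>\<^bsub>G\<^esub> word_val G x (foldr cc z v)"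
    using wv_cc[of a "foldr cc z v"] Cons.prems s by simp
  also have "\<dots> = letter_val G x a \<otimes>\<^bsub>G\<^esub> (word_val G x z \<otimes>\<^bsub>G\<^esub> word_val G x v)"
    using Cons by simp
  also have "\<dots> = word_val G x (a # z) \<otimes>\<^bsub>G\<^esub> word_val G x v"
    using Cons.prems lv_carrier wv_carrier grp by (simp add: wv_Cons group.is_monoid monoid.m_assoc)
  finally show ?case .
qed

lemma wv_append: "\<forall>l\<in>set u. fst l < k \<Longrightarrow> \<forall>l\<in>set v. fst l < k \<Longrightarrow>
   word_val G x (u @ v) = word_val G x u \<otimes>\<^bsub>G\<^esub> word_val G x v"
proof (induction u)
  case Nil then show ?case using wv_carrier grp by (simp add: word_val_def group.is_monoid monoid.l_one)
next
  case (Cons a u)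
  have "word_val G x ((a # u) @ v) = letter_val G x a \<otimes>\<^bsub>G\<^esub> (word_val G x u \<otimes>\<^bsub>G\<^esub> word_val G x v)"
    using Cons by (simp add: wv_Cons)
  also have "\<dots> = word_val G x (a # u) \<otimes>\<^bsub>G\<^esub> word_val G x v"
    using Cons.prems lv_carrier wv_carrier grp by (simp add: wv_Cons group.is_monoid monoid.m_assoc)
  finally show ?case .
qed

lemma wv_fg_mult: "\<forall>l\<in>set u. fst l < k \<Longrightarrow> \<forall>l\<in>set v. fst l < k \<Longrightarrow>
   word_val G x (fg_mult u v) = word_val G x u \<otimes>\<^bsub>G\<^esub> word_val G x v"
proof -
  assume u: "\<forall>l\<in>set u. fst l < k" and v: "\<forall>l\<in>set v. fst l < k"
  have "word_val G x (fg_mult u v) = word_val G x (foldr cc (u @ v) [])"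
    by (simp add: fg_mult_def reduce_def)
  also have "\<dots> = word_val G x (u @ v) \<otimes>\<^bsub>G\<^esub> word_val G x []" by (rule wv_foldr) (use u v in auto)
  also have "\<dots> = word_val G x (u @ v)"
  proof -
    have c: "word_val G x (u @ v) \<in> carrier G" using wv_carrier[of "u @ v"] u v by auto
    have e: "word_val G x [] = \<one>\<^bsub>G\<^esub>" by (simp add: word_val_def)
    show ?thesis using c grp by (simp add: e group.is_monoid monoid.r_one)
  qed
  also have "\<dots> = word_val G x u \<otimes>\<^bsub>G\<^esub> word_val G x v"
    using wv_append[OF u v] .
  finally show ?thesis .
qed

lemma key_eq: "a \<in> free_group_words k \<Longrightarrow> w \<in> free_group_words k \<Longrightarrow>
  (word_val G x a = word_val G x (fg_mult a w)) \<longleftrightarrow> word_val G x w = \<one>\<^bsub>G\<^esub>"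
  using wv_fg_mult[of a w] wv_carrier[of a] wv_carrier[of w] grp
  by (simp add: free_group_words_def group.l_cancel_one')

end

lemma reduced_take: "reduced w \<Longrightarrow> reduced (take j w)"
proof (induction w arbitrary: j)
  case Nil then show ?case by simp
next
  case (Cons a w)
  show ?case
  proof (cases j)
    case 0 then show ?thesis by simp
  next
    case (Suc j')
    have rw: "reduced w" and h: "w = [] \<or> hd w \<noteq> inv_letter a" using Cons.prems by (auto simp: reduced_Cons)
    have "reduced (take j' w)" by (rule Cons.IH[OF rw])
    moreover have "take j' w = [] \<or> hd (take j' w) \<noteq> inv_letter a"
      using h by (cases w; cases j') auto
    ultimately show ?thesis using Suc by (simp add: reduced_Cons)
  qed
qed

lemma length_cc: "length (cc a w) \<le> Suc (length w)"
  by (cases w) (auto simp: cancel_cons_def)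

lemma length_foldr_cc: "length (foldr cc z v) \<le> length z + length v"
proof (induction z)
  case Nil then show ?case by simp
next
  case (Cons a z)
  then show ?case using length_cc[of a "foldr cc z v"] by simp
qed

lemma length_fg_mult: "length (fg_mult u v) \<le> length u + length v"
  unfolding fg_mult_def reduce_def using length_foldr_cc[of "u @ v" "[]"] by simp

lemma finite_ball: "finite (ball_fg k n)"
proof -
  have "ball_fg k n \<subseteq> {xs. set xs \<subseteq> {..<k} \<times> UNIV \<and> length xs \<le> n}"
    by (auto simp: ball_fg_def free_group_words_def)
  moreover have "finite {xs. set xs \<subseteq> ({..<k} \<times> (UNIV :: bool set)) \<and> length xs \<le> n}"
    by (rule finite_lists_length_le) simp
  ultimately show ?thesis by (rule finite_subset)
qed

lemma nil_ball: "[] \<in> ball_fg k n"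
  by (simp add: ball_fg_def free_group_words_def)

lemma card_ball_pos: "0 < card (ball_fg k n)"
  using finite_ball nil_ball by (metis card_gt_0_iff empty_iff)

lemma ball_cover:
  assumes "m \<le> n"
  shows "card (ball_fg k n) \<le> card (ball_fg k (n - m)) * card {s. set s \<subseteq> ({..<k} \<times> (UNIV :: bool set)) \<and> length s \<le> m}"
proof -
  let ?Suf = "{s. set s \<subseteq> ({..<k} \<times> (UNIV :: bool set)) \<and> length s \<le> m}"
  have fs: "finite ?Suf" by (rule finite_lists_length_le) simp
  have "ball_fg k n \<subseteq> (\<lambda>(p, s). p @ s) ` (ball_fg k (n - m) \<times> ?Suf)"
  proof
    fix v assume v: "v \<in> ball_fg k n"
    have "take (n - m) v \<in> ball_fg k (n - m)"
      using v reduced_take by (auto simp: ball_fg_def free_group_words_def dest: in_set_takeD)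
    moreover have "drop (n - m) v \<in> ?Suf"
    proof -
      have a: "\<forall>l\<in>set v. fst l < k" "length v \<le> n" using v by (auto simp: ball_fg_def free_group_words_def)
      have "\<forall>l\<in>set (drop (n - m) v). fst l < k" using a(1) set_drop_subset[of "n - m" v] by blast
      then have "set (drop (n - m) v) \<subseteq> {..<k} \<times> UNIV" by (auto simp: mem_Times_iff)
      moreover have "length (drop (n - m) v) \<le> m" using a(2) assms by simp
      ultimately show ?thesis by simp
    qed
    ultimately show "v \<in> (\<lambda>(p, s). p @ s) ` (ball_fg k (n - m) \<times> ?Suf)"
      by (intro image_eqI[of _ _ "(take (n - m) v, drop (n - m) v)"]) auto
  qed
  then have "card (ball_fg k n) \<le> card ((\<lambda>(p, s). p @ s) ` (ball_fg k (n - m) \<times> ?Suf))"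
    by (rule card_mono[rotated]) (use finite_ball fs in auto)
  also have "\<dots> \<le> card (ball_fg k (n - m) \<times> ?Suf)" by (rule card_image_le) (use finite_ball fs in auto)
  also have "\<dots> = card (ball_fg k (n - m)) * card ?Suf" by (rule card_cartesian_product)
  finally show ?thesis .
qed

lemma ratio_large:
  assumes "UB_generic k S" "0 < \<delta>"
  shows "\<exists>n\<ge>m. \<exists>\<omega>\<in>free_group_words k.
     1 - \<delta> < real (card (S \<inter> fg_mult \<omega> ` ball_fg k n)) / real (card (ball_fg k n))"
proof (rule ccontr)
  assume "\<not> ?thesis"
  then have le: "\<And>n \<omega>. n \<ge> m \<Longrightarrow> \<omega> \<in> free_group_words k \<Longrightarrow>
     real (card (S \<inter> fg_mult \<omega> ` ball_fg k n)) / real (card (ball_fg k n)) \<le> 1 - \<delta>"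
    by (meson not_less)
  have ne: "free_group_words k \<noteq> {}" using nil_ball by (auto simp: ball_fg_def)
  have "eventually (\<lambda>n. ereal (SUP \<omega>\<in>free_group_words k.
        real (card (S \<inter> fg_mult \<omega> ` ball_fg k n)) / real (card (ball_fg k n))) \<le> ereal (1 - \<delta>)) sequentially"
    unfolding eventually_sequentially
    by (rule exI[of _ m]) (auto intro!: cSUP_least ne le)
  then have "limsup (\<lambda>n. ereal (SUP \<omega>\<in>free_group_words k.
        real (card (S \<inter> fg_mult \<omega> ` ball_fg k n)) / real (card (ball_fg k n)))) \<le> ereal (1 - \<delta>)"
    by (rule Limsup_bounded)
  then show False using assms unfolding UB_generic_def by simp
qed

lemma exists_pair:
  assumes S: "S \<subseteq> free_group_words k" and gen: "UB_generic k S" and w: "w \<in> free_group_words k"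
  shows "\<exists>a\<in>S. fg_mult a w \<in> S"
proof -
  let ?m = "length w"
  let ?Suf = "{s. set s \<subseteq> ({..<k} \<times> (UNIV :: bool set)) \<and> length s \<le> ?m}"
  define C where "C = card ?Suf"
  have fs: "finite ?Suf" by (rule finite_lists_length_le) simp
  have e: "[] \<in> ?Suf" by simp
  have Cpos: "0 < C" unfolding C_def card_gt_0_iff using fs e by blast
  define \<delta> :: real where "\<delta> = 1 / (2 * C)"
  have dpos: "0 < \<delta>" using Cpos by (simp add: \<delta>_def)
  obtain n \<omega> where nm: "n \<ge> ?m" and om: "\<omega> \<in> free_group_words k"
    and rat: "1 - \<delta> < real (card (S \<inter> fg_mult \<omega> ` ball_fg k n)) / real (card (ball_fg k n))"
    using ratio_large[OF gen dpos] by blast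
  define N where "N = card (ball_fg k n)"
  define A where "A = S \<inter> fg_mult \<omega> ` ball_fg k n"
  define D where "D = ball_fg k (n - ?m)"
  have Npos: "0 < N" unfolding N_def by (rule card_ball_pos)
  have fB: "finite (fg_mult \<omega> ` ball_fg k n)" using finite_ball by simp
  have cardA: "(1 - \<delta>) * N < card A" using rat Npos unfolding A_def N_def by (simp add: field_simps)
  have cardOB: "card (fg_mult \<omega> ` ball_fg k n) \<le> N" unfolding N_def by (rule card_image_le[OF finite_ball])
  have cover: "N \<le> card D * C" unfolding N_def D_def C_def by (rule ball_cover[OF nm])
  have fD: "finite D" unfolding D_def by (rule finite_ball)
  have Dsub: "D \<subseteq> free_group_words k" unfolding D_def ball_fg_def by auto
  have wr: "reduced w" using w by (simp add: free_group_words_def)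
  define f1 where "f1 u = fg_mult \<omega> u" for u
  define f2 where "f2 u = fg_mult \<omega> (fg_mult u w)" for u
  have inj_left: "inj_on (fg_mult \<omega>) (free_group_words k)"
  proof (rule inj_onI)
    fix u v assume u: "u \<in> free_group_words k" and v: "v \<in> free_group_words k" and e: "fg_mult \<omega> u = fg_mult \<omega> v"
    have ur: "reduced u" and vr: "reduced v" using u v by (auto simp: free_group_words_def)
    have "foldr cc \<omega> u = foldr cc \<omega> v" using e by (simp add: fg_mult_foldr[OF ur] fg_mult_foldr[OF vr])
    then show "u = v" using left_cancel[OF ur, of \<omega>] left_cancel[OF vr, of \<omega>] by metis
  qed
  have inj1: "inj_on f1 D" unfolding f1_def using inj_left Dsub by (rule inj_on_subset)
  have inj2: "inj_on f2 D"
  proof (rule inj_onI)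
    fix u v assume u: "u \<in> D" and v: "v \<in> D" and e: "f2 u = f2 v"
    have uF: "u \<in> free_group_words k" and vF: "v \<in> free_group_words k" using u v Dsub by auto
    have m1: "fg_mult u w \<in> free_group_words k" by (rule fgw_mult[OF uF w])
    have m2: "fg_mult v w \<in> free_group_words k" by (rule fgw_mult[OF vF w])
    have eq: "fg_mult u w = fg_mult v w" using inj_onD[OF inj_left e[unfolded f2_def] m1 m2] .
    have ur: "reduced u" and vr: "reduced v" using uF vF by (auto simp: free_group_words_def)
    have "u = reduce (fg_mult u w @ fginv w)" using right_cancel[OF ur wr] by simp
    also have "\<dots> = reduce (fg_mult v w @ fginv w)" using eq by simp
    also have "\<dots> = v" using right_cancel[OF vr wr] by simp
    finally show "u = v" .
  qed
  have DB: "u \<in> ball_fg k n" if "u \<in> D" for u using that unfolding D_def ball_fg_def by auto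
  have DBw: "fg_mult u w \<in> ball_fg k n" if "u \<in> D" for u
  proof -
    have "length (fg_mult u w) \<le> length u + ?m" by (rule length_fg_mult)
    also have "\<dots> \<le> n" using that nm unfolding D_def ball_fg_def by auto
    finally show ?thesis using fgw_mult[of u k w] that Dsub w unfolding ball_fg_def by auto
  qed
  define Bad1 where "Bad1 = {u\<in>D. f1 u \<notin> S}"
  define Bad2 where "Bad2 = {u\<in>D. f2 u \<notin> S}"
  have bad_bound: "real (card Bad) < \<delta> * N" if "Bad \<subseteq> D" "inj_on f Bad" "\<And>u. u \<in> Bad \<Longrightarrow> f u \<in> fg_mult \<omega> ` ball_fg k n - A"
    for Bad f
  proof -
    have "card Bad = card (f ` Bad)" using that(2) by (simp add: card_image)
    also have "\<dots> \<le> card (fg_mult \<omega> ` ball_fg k n - A)" by (rule card_mono) (use fB that(3) in auto)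
    also have "\<dots> = card (fg_mult \<omega> ` ball_fg k n) - card A"
      by (rule card_Diff_subset) (use fB in \<open>auto simp: A_def intro: finite_subset\<close>)
    finally have "real (card Bad) \<le> real (card (fg_mult \<omega> ` ball_fg k n)) - real (card A)"
      using card_mono[OF fB, of A] by (auto simp: A_def)
    also have "\<dots> < \<delta> * N" using cardA cardOB by (simp add: algebra_simps)
    finally show ?thesis .
  qed
  have s1: "Bad1 \<subseteq> D" and s2: "Bad2 \<subseteq> D" by (auto simp: Bad1_def Bad2_def)
  have b1: "real (card Bad1) < \<delta> * N"
  proof (rule bad_bound[OF s1 inj_on_subset[OF inj1 s1]])
    fix u assume u: "u \<in> Bad1"
    then have "f1 u \<in> fg_mult \<omega> ` ball_fg k n" using DB s1 unfolding f1_def by blast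
    moreover have "f1 u \<notin> A" using u unfolding Bad1_def A_def by blast
    ultimately show "f1 u \<in> fg_mult \<omega> ` ball_fg k n - A" by blast
  qed
  have b2: "real (card Bad2) < \<delta> * N"
  proof (rule bad_bound[OF s2 inj_on_subset[OF inj2 s2]])
    fix u assume u: "u \<in> Bad2"
    then have "f2 u \<in> fg_mult \<omega> ` ball_fg k n" using DBw s2 unfolding f2_def by blast
    moreover have "f2 u \<notin> A" using u unfolding Bad2_def A_def by blast
    ultimately show "f2 u \<in> fg_mult \<omega> ` ball_fg k n - A" by blast
  qed
  have "\<not> D \<subseteq> Bad1 \<union> Bad2"
  proof
    assume "D \<subseteq> Bad1 \<union> Bad2"
    then have "card D \<le> card (Bad1 \<union> Bad2)" by (rule card_mono[rotated]) (use fD in \<open>auto simp: Bad1_def Bad2_def\<close>)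
    also have "\<dots> \<le> card Bad1 + card Bad2" by (rule card_Un_le)
    finally have "real (card D) < 2 * \<delta> * N" using b1 b2 by linarith
    also have "2 * \<delta> * N = N / C" using Cpos by (simp add: \<delta>_def)
    finally have "real (card D) * C < N" using Cpos by (simp add: field_simps)
    moreover have "real N \<le> real (card D) * real C" using of_nat_mono[OF cover] by simp
    ultimately show False by linarith
  qed
  then obtain u where u: "u \<in> D" "f1 u \<in> S" "f2 u \<in> S" unfolding Bad1_def Bad2_def by blast
  have ur: "reduced u" using u(1) Dsub by (auto simp: free_group_words_def)
  have "f2 u = fg_mult (f1 u) w" unfolding f1_def f2_def by (rule fg_assoc[OF ur wr, symmetric])
  then show ?thesis using u by auto
qed

definition ldec :: "nat \<Rightarrow> letter" where "ldec n = (n div 2, odd n)"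

lemma letter_code_ldec[simp]: "letter_code (ldec n) = n"
  by (simp add: ldec_def letter_code_def)

lemma ldec_code[simp]: "ldec (letter_code l) = l"
  by (cases l) (auto simp: ldec_def letter_code_def)

lemma letter_code_inj: "letter_code a = letter_code b \<longleftrightarrow> a = b"
  by (metis ldec_code)

lemma lc_lt: "fst l < k \<Longrightarrow> letter_code l < 2 * k"
  by (cases l) (auto simp: letter_code_def)

lemma ldec_fst: "n < 2 * k \<Longrightarrow> fst (ldec n) < k"
  by (auto simp: ldec_def)

lemma invc_code: "invc (letter_code a) = letter_code (inv_letter a)"
  by (cases a) (auto simp: invc_def letter_code_def inv_letter_def)

lemma word_code_cc: "word_code (cc a v) = cccf (letter_code a) (word_code v)"
proof (cases v)
  case Nil then show ?thesis by (simp add: cancel_cons_def cccf_def word_code_def consc_def)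
next
  case (Cons b v')
  have "letter_code b = invc (letter_code a) \<longleftrightarrow> b = inv_letter a"
    by (simp add: invc_code letter_code_inj)
  moreover have e: "word_code (b # v') = list_encode (letter_code b # map letter_code v')"
    by (simp add: word_code_def del: list_encode.simps)
  moreover have "list_encode (letter_code b # map letter_code v') \<noteq> 0" by simp
  moreover have "word_code (a # b # v') = consc (letter_code a) (list_encode (letter_code b # map letter_code v'))"
    by (simp only: consc_enc word_code_def list.map)
  moreover have "word_code v' = list_encode (map letter_code v')" by (simp add: word_code_def del: list_encode.simps)
  ultimately show ?thesis using Cons
    by (simp add: cancel_cons_def cccf_def del: list_encode.simps)
qed

definition "TLp = Pr 1 (Idf 1 0) (ctl 3 (Idf 3 1))"

lemma rn_tl: "rec_nat c (\<lambda>i r. tlc r) j = (tlc ^^ j) c"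
  by (induction j) auto

lemma comp_TLp: "computes 2 TLp (\<lambda>xs. (tlc ^^ (xs ! 0)) (xs ! 1))"
proof -
  have a: "computes 1 (Idf 1 0) (\<lambda>xs. xs ! 0)" by (rule comp_Id) simp
  have b: "computes 3 (ctl 3 (Idf 3 1)) (\<lambda>xs. tlc (xs ! 1))" by (rule comp_tl[OF comp_Id]) simp
  show ?thesis unfolding TLp_def
    by (rule computes_cong[OF comp_PrI[OF a b]]) (auto simp: rn_tl length_Suc_conv numeral_2_eq_2)
qed

definition accf :: "nat \<Rightarrow> nat \<Rightarrow> nat \<Rightarrow> nat \<Rightarrow> nat" where
  "accf K c a0 j = rec_nat a0 (\<lambda>i r. if (tlc ^^ i) c \<noteq> 0 then cccf (hdc ((tlc ^^ i) c) mod K) r else r) j"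

definition "ACCs K = cif 4 (Cn 4 TLp [Idf 4 0, Idf 4 2])
    (cccp 4 (Cn 4 (modk1 K) [chd 4 (Cn 4 TLp [Idf 4 0, Idf 4 2])]) (Idf 4 1)) (Idf 4 1)"

lemma comp_ACCs: "0 < K \<Longrightarrow> computes 4 (ACCs K) (\<lambda>zs. if (tlc ^^ (zs ! 0)) (zs ! 2) \<noteq> 0
   then cccf (hdc ((tlc ^^ (zs ! 0)) (zs ! 2)) mod K) (zs ! 1) else zs ! 1)"
proof -
  assume K: "0 < K"
  have r: "computes 4 (Cn 4 TLp [Idf 4 0, Idf 4 2]) (\<lambda>zs. (tlc ^^ (zs ! 0)) (zs ! 2))"
    by (rule computes_cong[OF comp_Cn2[OF comp_TLp comp_Id comp_Id]]) simp_all
  show ?thesis unfolding ACCs_def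
    by (rule computes_cong[OF comp_if[OF r comp_ccc[OF comp_Cn1[OF comp_modk1[OF K] comp_hd[OF r]] comp_Id] comp_Id]]) simp_all
qed

definition "ACC K = Pr 2 (Idf 2 1) (ACCs K)"

lemma comp_ACC: "0 < K \<Longrightarrow> computes 3 (ACC K) (\<lambda>xs. accf K (xs ! 1) (xs ! 2) (xs ! 0))"
proof -
  assume K: "0 < K"
  have a: "computes 2 (Idf 2 1) (\<lambda>xs. xs ! 1)" by (rule comp_Id) simp
  show ?thesis unfolding ACC_def
    by (rule computes_cong[OF comp_PrI[OF a comp_ACCs[OF K]]])
       (auto simp: accf_def length_Suc_conv numeral_2_eq_2 numeral_3_eq_3 intro!: rec_nat_cong')
qed

definition gcode :: "nat \<Rightarrow> nat \<Rightarrow> nat \<Rightarrow> nat" where "gcode K c a = accf K c a c"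

definition "Gp K = Cn 2 (ACC K) [Idf 2 0, Idf 2 0, Idf 2 1]"

lemma comp_Gp: "0 < K \<Longrightarrow> computes 2 (Gp K) (\<lambda>xs. gcode K (xs ! 0) (xs ! 1))"
proof -
  assume K: "0 < K"
  have l: "list_all2 (\<lambda>p P. computes 2 p P) [Idf 2 0, Idf 2 0, Idf 2 1] [\<lambda>xs. xs ! 0, \<lambda>xs. xs ! 0, \<lambda>xs. xs ! 1]"
    by (simp add: comp_Id)
  have c: "computes (length [Idf 2 0, Idf 2 0, Idf 2 1]) (ACC K) (\<lambda>xs. accf K (xs ! 1) (xs ! 2) (xs ! 0))"
    using comp_ACC[OF K] by (simp add: numeral_3_eq_3)
  show ?thesis unfolding Gp_def
    by (rule computes_cong[OF comp_Cn_list[OF l c]]) (simp add: gcode_def)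
qed

definition "Vp K P = Cn 2 (Cl P 2) [Cn 2 psnd1 [Idf 2 0], Cn 2 (Gp K) [Cn 2 pfst1 [Idf 2 0], cconst 2 0],
   Cn 2 (Gp K) [Cn 2 pfst1 [Idf 2 0], Idf 2 1]]"

definition Vf :: "nat \<Rightarrow> recf \<Rightarrow> nat \<Rightarrow> nat \<Rightarrow> nat" where
  "Vf K P s W = cv P (snd (prod_decode s)) [gcode K (fst (prod_decode s)) 0, gcode K (fst (prod_decode s)) W]"

lemma comp_Vp: "0 < K \<Longrightarrow> computes 2 (Vp K P) (\<lambda>xs. Vf K P (xs ! 0) (xs ! 1))"
proof -
  assume K: "0 < K"
  have p1: "computes 2 (Cn 2 pfst1 [Idf 2 0]) (\<lambda>xs. fst (prod_decode (xs ! 0)))"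
    by (rule computes_cong[OF comp_Cn1[OF comp_pfst1 comp_Id]]) simp_all
  have p2: "computes 2 (Cn 2 psnd1 [Idf 2 0]) (\<lambda>xs. snd (prod_decode (xs ! 0)))"
    by (rule computes_cong[OF comp_Cn1[OF comp_psnd1 comp_Id]]) simp_all
  have g1: "computes 2 (Cn 2 (Gp K) [Cn 2 pfst1 [Idf 2 0], cconst 2 0]) (\<lambda>xs. gcode K (fst (prod_decode (xs ! 0))) 0)"
    by (rule computes_cong[OF comp_Cn2[OF comp_Gp[OF K] p1 comp_const]]) simp
  have g2: "computes 2 (Cn 2 (Gp K) [Cn 2 pfst1 [Idf 2 0], Idf 2 1]) (\<lambda>xs. gcode K (fst (prod_decode (xs ! 0))) (xs ! 1))"
    by (rule computes_cong[OF comp_Cn2[OF comp_Gp[OF K] p1 comp_Id]]) simp_all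
  have l: "list_all2 (\<lambda>p P. computes 2 p P) [Cn 2 psnd1 [Idf 2 0], Cn 2 (Gp K) [Cn 2 pfst1 [Idf 2 0], cconst 2 0],
      Cn 2 (Gp K) [Cn 2 pfst1 [Idf 2 0], Idf 2 1]]
     [\<lambda>xs. snd (prod_decode (xs ! 0)), \<lambda>xs. gcode K (fst (prod_decode (xs ! 0))) 0,
      \<lambda>xs. gcode K (fst (prod_decode (xs ! 0))) (xs ! 1)]"
    using p2 g1 g2 by simp
  have c: "computes (length [Cn 2 psnd1 [Idf 2 0], Cn 2 (Gp K) [Cn 2 pfst1 [Idf 2 0], cconst 2 0],
      Cn 2 (Gp K) [Cn 2 pfst1 [Idf 2 0], Idf 2 1]]) (Cl P 2) (\<lambda>ys. cv P (hd ys) (tl ys))"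
    using comp_Cl[of 2 P] by (simp add: numeral_3_eq_3)
  show ?thesis unfolding Vp_def
    by (rule computes_cong[OF comp_Cn_list[OF l c]]) (simp add: Vf_def)
qed

lemma tlc_enc_gen: "tlc (list_encode xs) = list_encode (tl xs)"
  by (cases xs) (simp_all only: tlc_enc tlc_0 list_encode.simps(1) list.sel)

lemma tlc_iter: "(tlc ^^ i) (list_encode L) = list_encode (drop i L)"
  by (induction i) (auto simp: tlc_enc_gen drop_Suc tl_drop)

lemma length_le_list_encode: "length xs \<le> list_encode xs"
proof (induction xs)
  case Nil then show ?case by simp
next
  case (Cons x xs)
  have "list_encode xs \<le> prod_encode (x, list_encode xs)" by (rule le_prod_encode_2)
  then show ?case using Cons by simp
qed

definition gg :: "nat \<Rightarrow> nat \<Rightarrow> letter list \<Rightarrow> letter list" where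
  "gg K l acc = cc (ldec (l mod K)) acc"

lemma word_code_Nil[simp]: "word_code [] = 0" by (simp add: word_code_def)

lemma accf_sem: "accf K (list_encode L) (word_code v) j = word_code (fold (gg K) (take j L) v)"
proof (induction j)
  case 0 then show ?case by (simp add: accf_def)
next
  case (Suc j)
  have a: "accf K (list_encode L) (word_code v) (Suc j) =
     (if list_encode (drop j L) \<noteq> 0 then cccf (hdc (list_encode (drop j L)) mod K) (accf K (list_encode L) (word_code v) j)
      else accf K (list_encode L) (word_code v) j)"
    by (simp add: accf_def tlc_iter del: list_encode.simps)
  show ?case
  proof (cases "j < length L")
    case True
    then have d: "drop j L = L ! j # drop (Suc j) L" by (simp add: Cons_nth_drop_Suc)
    have "accf K (list_encode L) (word_code v) (Suc j) = cccf (L ! j mod K) (word_code (fold (gg K) (take j L) v))"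
      using a Suc by (simp add: d del: list_encode.simps) (simp add: d)
    also have "\<dots> = cccf (letter_code (ldec (L ! j mod K))) (word_code (fold (gg K) (take j L) v))" by simp
    also have "\<dots> = word_code (fold (gg K) (take (Suc j) L) v)"
      using True word_code_cc[of "ldec (L ! j mod K)" "fold (gg K) (take j L) v"]
      by (simp add: take_Suc_conv_app_nth gg_def)
    finally show ?thesis .
  next
    case False
    then show ?thesis using a Suc by simp
  qed
qed

lemma gcode_sem: "gcode K c (word_code v) = word_code (fold (gg K) (list_decode c) v)"
proof -
  have "gcode K c (word_code v) = accf K (list_encode (list_decode c)) (word_code v) (list_encode (list_decode c))"
    by (simp add: gcode_def)
  also have "\<dots> = word_code (fold (gg K) (take (list_encode (list_decode c)) (list_decode c)) v)" by (rule accf_sem)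
  also have "take (list_encode (list_decode c)) (list_decode c) = list_decode c"
    using length_le_list_encode[of "list_decode c"] by simp
  finally show ?thesis .
qed

lemma fold_gg: "fold (gg K) L v = foldr cc (rev (map (\<lambda>l. ldec (l mod K)) L)) v"
  by (induction L arbitrary: v) (auto simp: gg_def)

lemma fold_gg_mult: "reduced v \<Longrightarrow> fold (gg K) L v = fg_mult (fold (gg K) L []) v"
proof -
  assume v: "reduced v"
  let ?Z = "rev (map (\<lambda>l. ldec (l mod K)) L)"
  have "fg_mult (fold (gg K) L []) v = foldr cc (reduce ?Z) v"
    by (simp add: fold_gg fg_mult_foldr[OF v] reduce_def)
  also have "\<dots> = foldr cc ?Z v" by (rule foldr_reduce[OF v])
  finally show ?thesis by (simp add: fold_gg)
qed

lemma fold_gg_fgw: "0 < k \<Longrightarrow> fold (gg (2 * k)) L [] \<in> free_group_words k"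
proof -
  assume k: "0 < k"
  let ?Z = "rev (map (\<lambda>l. ldec (l mod (2 * k))) L)"
  have "\<forall>l\<in>set ?Z. fst l < k" using k by (auto intro!: ldec_fst)
  then have "reduce ?Z \<in> free_group_words k" by (rule fgw_reduce)
  then show ?thesis by (simp add: fold_gg reduce_def)
qed

lemma fold_gg_word: "a \<in> free_group_words k \<Longrightarrow>
   fold (gg (2 * k)) (rev (map letter_code a)) v = foldr cc a v"
proof -
  assume a: "a \<in> free_group_words k"
  have "map (\<lambda>l. ldec (l mod (2 * k))) (map letter_code a) = a"
  proof -
    have "map ((\<lambda>l. ldec (l mod (2 * k))) \<circ> letter_code) a = a"
      by (rule map_idI) (use a in \<open>auto simp: free_group_words_def lc_lt\<close>)
    then show ?thesis by simp
  qed
  then show ?thesis by (simp add: fold_gg rev_map)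
qed

definition "Mainp K P = Cn 1 (cpred 2 (Vp K P)) [Mn 1 (cnot 2 (Vp K P)), Idf 1 0]"

theorem theorem2p9:
  fixes G :: "('g, 'b) monoid_scheme" and k :: nat and x :: "nat \<Rightarrow> 'g"
    and S :: "letter list set"
  assumes "group G"
    and "x ` {..<k} \<subseteq> carrier G"
    and "generate G (x ` {..<k}) = carrier G"
    and "S \<subseteq> free_group_words k"
    and "UB_generic k S"
    and "equality_problem_solvable_on G k x (S \<times> S)"
  shows "word_problem_solvable G k x"
proof (cases "k = 0")
  case True
  have "rec_eval (cconst 1 1) [word_code w] (if word_val G x w = \<one>\<^bsub>G\<^esub> then 1 else 0)"
    if "w \<in> free_group_words k" for w
  proof -
    have "w = []" using that True by (cases w) (auto simp: free_group_words_def)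
    then show ?thesis using computesD[OF comp_const[of 1 1], of "[word_code w]"] by (simp add: word_val_def)
  qed
  then show ?thesis unfolding word_problem_solvable_def by blast
next
  case False
  then have k: "0 < k" by simp
  define K where "K = 2 * k"
  have K: "0 < K" using k by (simp add: K_def)
  interpret gctx G k x using assms(1,2) by (simp add: gctx_def)
  obtain P where Phalt: "\<forall>(u, v)\<in>S \<times> S. \<exists>r. rec_eval P [word_code u, word_code v] r"
    and Pcorr: "\<forall>u\<in>free_group_words k. \<forall>v\<in>free_group_words k. \<forall>r.
             rec_eval P [word_code u, word_code v] r \<longrightarrow>
             r = (if word_val G x u = word_val G x v then 1 else 0)"
    using assms(6) unfolding equality_problem_solvable_on_def by blast
  have "rec_eval (Mainp K P) [word_code w] (if word_val G x w = \<one>\<^bsub>G\<^esub> then 1 else 0)"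
    if w: "w \<in> free_group_words k" for w
  proof -
    let ?W = "word_code w"
    have wr: "reduced w" using w by (simp add: free_group_words_def)
    have gc: "gcode K c ?W = word_code (fg_mult (fold (gg K) (list_decode c) []) w)"
      and gc0: "gcode K c 0 = word_code (fold (gg K) (list_decode c) [])" for c
      using gcode_sem[of K c w] gcode_sem[of K c "[]"] fold_gg_mult[OF wr, of K "list_decode c"] by simp_all
    obtain a where aS: "a \<in> S" and awS: "fg_mult a w \<in> S" using exists_pair[OF assms(4,5) w] by blast
    obtain r where "rec_eval P [word_code a, word_code (fg_mult a w)] r" using Phalt aS awS by blast
    then obtain t where t: "cv P t [word_code a, word_code (fg_mult a w)] = Suc r" using cv_complete by blast
    define c where "c = list_encode (rev (map letter_code a))"
    have aF: "a \<in> free_group_words k" using aS assms(4) by blast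
    have fa: "fold (gg K) (list_decode c) [] = a"
      using fold_gg_word[OF aF, of "[]"] reduce_id[of a] aF
      by (simp add: c_def K_def reduce_def free_group_words_def)
    have "Vf K P (prod_encode (c, t)) ?W = Suc r"
      using t by (simp add: Vf_def gc gc0 fa)
    then have ex: "\<exists>y. (\<lambda>xs. if Vf K P (xs ! 0) (xs ! 1) = 0 then 1 else 0) (y # [?W]) = (0::nat)"
      by (intro exI[of _ "prod_encode (c, t)"]) simp
    have cq: "computes (Suc 1) (cnot 2 (Vp K P)) (\<lambda>xs. if Vf K P (xs ! 0) (xs ! 1) = 0 then 1 else 0)"
      using comp_not[OF comp_Vp[OF K, of P]] by (simp add: numeral_2_eq_2)
    define s where "s = (LEAST y. (\<lambda>xs. if Vf K P (xs ! 0) (xs ! 1) = 0 then 1 else 0) (y # [?W]) = (0::nat))"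
    have ms: "rec_eval (Mn 1 (cnot 2 (Vp K P))) [?W] s"
      unfolding s_def using ex by (elim exE) (rule eval_Mn[OF cq], simp_all)
    have "(\<lambda>xs. if Vf K P (xs ! 0) (xs ! 1) = 0 then 1 else 0) (s # [?W]) = (0::nat)"
      unfolding s_def using ex by (elim exE) (rule LeastI)
    then have nz: "Vf K P s ?W \<noteq> 0" by (simp split: if_splits)
    then obtain r' where r': "Vf K P s ?W = Suc r'" by (cases "Vf K P s ?W") auto
    define a' where "a' = fold (gg K) (list_decode (fst (prod_decode s))) []"
    have a'F: "a' \<in> free_group_words k" unfolding a'_def K_def by (rule fold_gg_fgw[OF k])
    have a'wF: "fg_mult a' w \<in> free_group_words k" by (rule fgw_mult[OF a'F w])
    have "rec_eval P [word_code a', word_code (fg_mult a' w)] r'"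
      using r' cv_sound by (simp add: Vf_def gc gc0 a'_def)
    then have "r' = (if word_val G x a' = word_val G x (fg_mult a' w) then 1 else 0)"
      using Pcorr a'F a'wF by blast
    then have rv: "r' = (if word_val G x w = \<one>\<^bsub>G\<^esub> then 1 else 0)"
      using key_eq[OF a'F w] by simp
    have cp: "computes 2 (cpred 2 (Vp K P)) (\<lambda>xs. Vf K P (xs ! 0) (xs ! 1) - 1)"
      by (rule comp_pred[OF comp_Vp[OF K]])
    have ev1: "rec_eval (cpred 2 (Vp K P)) [s, ?W] (Vf K P s ?W - 1)" using computesD[OF cp, of "[s, ?W]"] by simp
    have la: "list_all2 (\<lambda>g y. rec_eval g [?W] y) [Mn 1 (cnot 2 (Vp K P)), Idf 1 0] [s, ?W]"
      using ms ev_Id[of "[?W]" 1 0] by simp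
    have "rec_eval (Mainp K P) [?W] (Vf K P s ?W - 1)"
      unfolding Mainp_def by (rule ev_Cn[OF _ la ev1]) simp
    then show ?thesis using r' rv by simp
  qed
  then show ?thesis unfolding word_problem_solvable_def by blast
qed

end
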